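(* Let $p\in[1,\infty]$, $s>1+\frac1p$, let $u_0$ and $u_0^n$ be the functions defined below, and set $$u^{\mathrm{ap},4}_{n,1}(t,x)=(\Delta_nu_0)(x-tu_0(x)),\qquad u^{\mathrm{ap},4}_{n,2}(t,x)=(\Delta_nu_0^n)(x-tu_0^n(x)),\qquad t_n=\tfrac{8}{11}\pi n2^{-n}.$$ Let $N_0$ be a sufficiently large integer such that $\phi(x)\ge\phi(0)/2$ for all $x\in[0,2\pi2^{-N_0}]$. Then for all sufficiently large $n$ (with $n\gg N_0$), $$2^{ns}\big\|u^{\mathrm{ap},4}_{n,1}(t_n)-u^{\mathrm{ap},4}_{n,2}(t_n)\big\|_{L^p(\mathbb{R})}\ge2^{-\frac{N_0}{p}-3},$$ with the convention $\frac{N_0}{p}=0$ for $p=\infty$.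
   Context: Littlewood–Paley blocks on $\mathbb{R}$: with a smooth even $\vartheta:\mathbb{R}\to[0,1]$, $\operatorname{supp}\vartheta\subset[-4/3,4/3]$, $\vartheta\equiv1$ on $|\xi|\le3/4$, $\varphi(\xi)=\vartheta(\xi/2)-\vartheta(\xi)$, $\Delta_{-1}=\vartheta(D)$, $\Delta_j=\varphi(2^{-j}D)$ for $j\ge0$. Let $\widehat\phi\in C_c^\infty(\mathbb{R})$ be even, real, with values in $[0,1]$, $\widehat\phi=1$ on $|\xi|\le1/4$, $\widehat\phi=0$ on $|\xi|\ge1/2$, and $\phi$ the real Schwartz function whose Fourier transform is a positive multiple of $\widehat\phi$ ($\phi(0)=\|\phi\|_\infty>0$). Let $\gamma(s)=2^{2s}(2^s-1)$, $\tilde\phi=\gamma(s)\phi/\phi(0)$, $u_0(x)=\sum_{j\ge3}2^{-js}\tilde\phi(x)\cos(\frac{11}{8}2^jx)$. Let $\widehat\psi\in C_c^\infty(\mathbb{R})$ be even, real, with values in $[0,1]$, $\widehat\psi=1$ on $\frac12\le|\xi|\le\frac58$, $\widehat\psi=0$ on $|\xi|\ge\frac34$ or $|\xi|\le\frac38$, $\psi$ the real Schwartz function with Fourier transform a positive multiple of $\widehat\psi$ ($\psi(0)=\|\psi\|_\infty>0$), $\Phi=\psi/\psi(0)$, and $u_0^n=u_0+\frac1n\Phi$. *)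

theory Defs
  imports "HOL-Analysis.Analysis" "HOL-Probability.Essential_Supremum"
begin

definition smooth_fun :: "(real \<Rightarrow> real) \<Rightarrow> bool" where
  "smooth_fun f \<longleftrightarrow> (\<forall>k::nat. \<forall>x. ((deriv ^^ k) f) differentiable (at x))"

definition fourier :: "(real \<Rightarrow> complex) \<Rightarrow> real \<Rightarrow> complex" where
  "fourier f \<xi> = (LINT x|lborel. f x * cis (- (x * \<xi>)))"

definition inv_fourier :: "(real \<Rightarrow> complex) \<Rightarrow> real \<Rightarrow> complex" where
  "inv_fourier g x = (LINT \<xi>|lborel. g \<xi> * cis (x * \<xi>)) / complex_of_real (2 * pi)"

definition fmult :: "(real \<Rightarrow> real) \<Rightarrow> (real \<Rightarrow> real) \<Rightarrow> real \<Rightarrow> complex" where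
  "fmult m f = inv_fourier (\<lambda>\<xi>. complex_of_real (m \<xi>) * fourier (\<lambda>x. complex_of_real (f x)) \<xi>)"

definition lp_varphi :: "(real \<Rightarrow> real) \<Rightarrow> real \<Rightarrow> real" where
  "lp_varphi th \<xi> = th (\<xi> / 2) - th \<xi>"

definition LP_block :: "(real \<Rightarrow> real) \<Rightarrow> int \<Rightarrow> (real \<Rightarrow> real) \<Rightarrow> real \<Rightarrow> complex" where
  "LP_block th j f =
     (if j = -1 then fmult th f
      else if j \<ge> 0 then fmult (\<lambda>\<xi>. lp_varphi th (\<xi> / 2 powr (real_of_int j))) f
      else (\<lambda>_. 0))"

definition Lp_norm :: "ennreal \<Rightarrow> (real \<Rightarrow> complex) \<Rightarrow> ennreal" where
  "Lp_norm p f =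
     (if p = \<infinity> then esssup lborel (\<lambda>x. ennreal (cmod (f x)))
      else (let I = (\<integral>\<^sup>+ x. ennreal (cmod (f x) powr enn2real p) \<partial>lborel)
            in if I = \<infinity> then \<infinity> else ennreal (enn2real I powr (1 / enn2real p))))"

definition inv_exp :: "ennreal \<Rightarrow> real" where
  "inv_exp p = (if p = \<infinity> then 0 else 1 / enn2real p)"

text \<open>The Schwartz functions phi and psi (normalised so that their Fourier transforms are
  exactly phi-hat and psi-hat; only phi/phi(0) and psi/psi(0) enter the data).\<close>
definition schw_of :: "(real \<Rightarrow> real) \<Rightarrow> real \<Rightarrow> real" where
  "schw_of h x = Re (inv_fourier (\<lambda>\<xi>. complex_of_real (h \<xi>)) x)"

definition gam :: "real \<Rightarrow> real" where
  "gam s = 2 powr (2 * s) * (2 powr s - 1)"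

definition phi_tilde :: "(real \<Rightarrow> real) \<Rightarrow> real \<Rightarrow> real \<Rightarrow> real" where
  "phi_tilde \<phi>h s x = gam s * schw_of \<phi>h x / schw_of \<phi>h 0"

definition u0 :: "(real \<Rightarrow> real) \<Rightarrow> real \<Rightarrow> real \<Rightarrow> real" where
  "u0 \<phi>h s x = (\<Sum>j. 2 powr (- (real (j + 3)) * s) * phi_tilde \<phi>h s x
                        * cos (11 / 8 * 2 ^ (j + 3) * x))"

definition Phi_fun :: "(real \<Rightarrow> real) \<Rightarrow> real \<Rightarrow> real" where
  "Phi_fun \<psi>h x = schw_of \<psi>h x / schw_of \<psi>h 0"

definition u0n :: "(real \<Rightarrow> real) \<Rightarrow> (real \<Rightarrow> real) \<Rightarrow> real \<Rightarrow> nat \<Rightarrow> real \<Rightarrow> real" where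
  "u0n \<phi>h \<psi>h s n x = u0 \<phi>h s x + Phi_fun \<psi>h x / real n"

end

theory Submission
  imports Defs "HOL-Probability.Characteristic_Functions" "HOL-Probability.Sinc_Integral"
begin


lemma smooth_DERIV:
  assumes "smooth_fun f"
  shows "(((deriv ^^ k) f) has_field_derivative ((deriv ^^ Suc k) f x)) (at x)"
  using assms unfolding smooth_fun_def
  by (simp add: DERIV_deriv_iff_real_differentiable)

lemma smooth_cont:
  assumes "smooth_fun f"
  shows "isCont ((deriv ^^ k) f) x"
  using smooth_DERIV[OF assms] DERIV_isCont by blast

locale goodh =
  fixes h :: "real \<Rightarrow> real" and a0 b0 :: real
  assumes sm: "smooth_fun h"
  and ev: "\<And>\<xi>. h (- \<xi>) = h \<xi>"
  and rng: "\<And>\<xi>. 0 \<le> h \<xi> \<and> h \<xi> \<le> 1"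
  and supp: "\<And>\<xi>. \<bar>\<xi>\<bar> \<ge> 1 \<Longrightarrow> h \<xi> = 0"
  and ab: "a0 < b0" "\<And>\<xi>. a0 \<le> \<xi> \<Longrightarrow> \<xi> \<le> b0 \<Longrightarrow> h \<xi> = 1"
begin

lemma h_cont[continuous_intros]: "continuous_on A h"
  using smooth_cont[OF sm, where k=0] by (simp add: continuous_at_imp_continuous_on)

lemma h_isCont: "isCont h x"
  using smooth_cont[OF sm, where k=0] by simp

lemma h_meas[measurable]: "h \<in> borel_measurable borel"
  by (intro borel_measurable_continuous_onI h_cont)

lemma h_eq_ind: "h x = indicator {-1..1} x *\<^sub>R h x"
  using supp[of x] by (cases "\<bar>x\<bar> \<ge> 1") (auto simp: indicator_def)

lemma h_int: "integrable lborel h"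
proof -
  have "integrable lborel (\<lambda>x. indicator {-1..1::real} x *\<^sub>R h x)"
    by (intro borel_integrable_compact h_cont) auto
  then show ?thesis by (subst (asm) h_eq_ind[symmetric])
qed


lemma cont_meas: "continuous_on UNIV f \<Longrightarrow> f \<in> borel_measurable lborel"
  by (simp add: borel_measurable_continuous_onI)

definition J :: "real \<Rightarrow> complex" where
  "J x = (\<integral>\<xi>. complex_of_real (h \<xi>) * cis (x * \<xi>) \<partial>lborel)"

lemma hcis_meas[measurable]: "(\<lambda>\<xi>. complex_of_real (h \<xi>) * cis (x * \<xi>)) \<in> borel_measurable lborel"
  by (intro cont_meas continuous_intros)

lemma hcis_int: "integrable lborel (\<lambda>\<xi>. complex_of_real (h \<xi>) * cis (x * \<xi>))"
  by (rule Bochner_Integration.integrable_bound[OF h_int hcis_meas]) (auto simp: norm_mult)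

lemma J_cnj: "cnj (J x) = J (- x)"
proof -
  have "cnj (J x) = (\<integral>\<xi>. cnj (complex_of_real (h \<xi>) * cis (x * \<xi>)) \<partial>lborel)"
    unfolding J_def by (simp only: Bochner_Integration.integral_cnj)
  then show ?thesis by (simp add: J_def cis_cnj)
qed

lemma J_even: "J (- x) = J x"
proof -
  have "J (- x) = \<bar>-1\<bar> *\<^sub>R (\<integral>\<xi>. complex_of_real (h (0 + -1 * \<xi>)) * cis (- x * (0 + -1 * \<xi>)) \<partial>lborel)"
    unfolding J_def by (rule lborel_integral_real_affine) simp
  also have "\<dots> = J x" unfolding J_def by (simp add: ev)
  finally show ?thesis .
qed

lemma J_real: "J x = complex_of_real (Re (J x))"
  using J_cnj[of x] J_even[of x] by (simp add: complex_eq_iff)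

lemma inv_eq: "inv_fourier (\<lambda>\<xi>. complex_of_real (h \<xi>)) x = complex_of_real (schw_of h x)"
proof -
  have "inv_fourier (\<lambda>\<xi>. complex_of_real (h \<xi>)) x = J x / complex_of_real (2 * pi)"
    unfolding inv_fourier_def J_def ..
  moreover have "schw_of h x = Re (J x) / (2 * pi)"
    unfolding schw_of_def inv_fourier_def J_def[symmetric] by (simp add: Re_divide_of_real)
  moreover obtain r where "J x = complex_of_real r" using J_real by blast
  ultimately show ?thesis by simp
qed

lemma J0: "J 0 = complex_of_real (integral\<^sup>L lborel h)"
  unfolding J_def by simp

lemma int_h_pos: "integral\<^sup>L lborel h \<ge> b0 - a0"
proof -
  have "integral\<^sup>L lborel (indicator {a0..b0}) \<le> integral\<^sup>L lborel h"
    by (intro integral_mono h_int integrable_real_indicator) (auto simp: indicator_def ab rng less_imp_le[OF ab(1)])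
  then show ?thesis using ab by simp
qed

abbreviation "S \<equiv> schw_of h"

lemma S_J: "S x = Re (J x) / (2 * pi)"
  unfolding schw_of_def inv_fourier_def J_def[symmetric] by (simp add: Re_divide_of_real)

lemma S0: "S 0 = integral\<^sup>L lborel h / (2 * pi)"
  by (simp add: S_J J0)

lemma S0_pos: "S 0 \<ge> (b0 - a0) / (2 * pi)" "S 0 > 0"
  using int_h_pos ab by (auto simp: S0 divide_right_mono intro!: divide_pos_pos)

lemma S_bound: "\<bar>S x\<bar> \<le> S 0"
proof -
  have "norm (J x) \<le> (\<integral>\<xi>. norm (complex_of_real (h \<xi>) * cis (x * \<xi>)) \<partial>lborel)"
    unfolding J_def by (rule integral_norm_bound)
  also have "\<dots> = integral\<^sup>L lborel h" using rng by (simp add: norm_mult)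
  finally have "norm (J x) \<le> integral\<^sup>L lborel h" .
  then have "\<bar>Re (J x)\<bar> \<le> integral\<^sup>L lborel h" using abs_Re_le_cmod order_trans by blast
  then show ?thesis by (simp only: S_J[of x] S0) (simp add: abs_divide divide_right_mono)
qed

lemma cis_diff: "cmod (cis a - cis b) \<le> \<bar>a - b\<bar>"
proof -
  have "cis b * cis (a - b) = cis a" by (simp add: cis_mult)
  then have "cis a - cis b = cis b * (cis (a - b) - 1)"
    by (simp add: right_diff_distrib)
  then have "cmod (cis a - cis b) = cmod (cis (a - b) - 1)" by (simp add: norm_mult)
  also have "\<dots> \<le> \<bar>a - b\<bar>"
    using iexp_approx1[of "a - b" 0] by (simp add: cis_conv_exp)
  finally show ?thesis .
qed

lemma S_lip: "\<bar>S x - S y\<bar> \<le> S 0 * \<bar>x - y\<bar>"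
proof -
  have "J x - J y = (\<integral>\<xi>. complex_of_real (h \<xi>) * cis (x * \<xi>) - complex_of_real (h \<xi>) * cis (y * \<xi>) \<partial>lborel)"
    unfolding J_def by (rule Bochner_Integration.integral_diff[OF hcis_int hcis_int, symmetric])
  also have "norm \<dots> \<le> (\<integral>\<xi>. norm (complex_of_real (h \<xi>) * cis (x * \<xi>) - complex_of_real (h \<xi>) * cis (y * \<xi>)) \<partial>lborel)"
    by (rule integral_norm_bound)
  also have "\<dots> \<le> (\<integral>\<xi>. h \<xi> * \<bar>x - y\<bar> \<partial>lborel)"
  proof (rule integral_mono)
    show "integrable lborel (\<lambda>\<xi>. norm (complex_of_real (h \<xi>) * cis (x * \<xi>) - complex_of_real (h \<xi>) * cis (y * \<xi>)))"
      by (intro integrable_norm Bochner_Integration.integrable_diff hcis_int)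
    show "integrable lborel (\<lambda>\<xi>. h \<xi> * \<bar>x - y\<bar>)" by (intro integrable_mult_left h_int)
    fix \<xi> :: real
    have e: "complex_of_real (h \<xi>) * cis (x * \<xi>) - complex_of_real (h \<xi>) * cis (y * \<xi>) = complex_of_real (h \<xi>) * (cis (x * \<xi>) - cis (y * \<xi>))"
      by (simp add: algebra_simps)
    show "norm (complex_of_real (h \<xi>) * cis (x * \<xi>) - complex_of_real (h \<xi>) * cis (y * \<xi>)) \<le> h \<xi> * \<bar>x - y\<bar>"
    proof (cases "\<bar>\<xi>\<bar> \<ge> 1")
      case True then show ?thesis using supp[of \<xi>] rng[of \<xi>] by simp
    next
      case False
      have "cmod (cis (x * \<xi>) - cis (y * \<xi>)) \<le> \<bar>x * \<xi> - y * \<xi>\<bar>" by (rule cis_diff)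
      also have "\<dots> = \<bar>x - y\<bar> * \<bar>\<xi>\<bar>" by (simp add: abs_mult flip: left_diff_distrib)
      also have "\<dots> \<le> \<bar>x - y\<bar>" using False by (simp add: mult_left_le)
      finally show ?thesis unfolding e norm_mult using rng[of \<xi>]
        by (simp add: mult_left_mono)
    qed
  qed
  also have "\<dots> = integral\<^sup>L lborel h * \<bar>x - y\<bar>" by simp
  finally have "cmod (J x - J y) \<le> integral\<^sup>L lborel h * \<bar>x - y\<bar>" .
  then have "\<bar>Re (J x) - Re (J y)\<bar> \<le> integral\<^sup>L lborel h * \<bar>x - y\<bar>"
    by (metis abs_Re_le_cmod minus_complex.sel(1) order_trans)
  then show ?thesis unfolding S_J[of x] S_J[of y] S0
    by (simp add: diff_divide_distrib[symmetric] abs_divide divide_right_mono)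
qed

lemma S_cont[continuous_intros]: "continuous_on A S"
proof -
  have "(S 0)-lipschitz_on A S"
    by (intro lipschitz_onI) (auto simp: dist_real_def S_lip less_imp_le[OF S0_pos(2)])
  then show ?thesis by (rule lipschitz_on_continuous_on)
qed

lemma S_meas[measurable]: "S \<in> borel_measurable borel"
  by (intro borel_measurable_continuous_onI S_cont)

end


context goodh
begin

lemma dh: "(h has_field_derivative deriv h x) (at x)"
  using smooth_DERIV[OF sm, where k=0 and x=x] by simp

lemma ddh: "(deriv h has_field_derivative deriv (deriv h) x) (at x)"
  using smooth_DERIV[OF sm, where k=1 and x=x] by simp

lemma ddh_cont: "continuous_on A (deriv (deriv h))"
  using smooth_cont[OF sm, where k=2] by (simp add: continuous_at_imp_continuous_on numeral_2_eq_2)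

lemma dh_zero: assumes "\<bar>\<xi>\<bar> > 1" shows "deriv h \<xi> = 0"
proof -
  have "((\<lambda>_. 0) has_field_derivative 0) (at \<xi>)" by simp
  then have "(h has_field_derivative 0) (at \<xi>)"
  proof (rule has_field_derivative_transform_within_open[where S="- {-1..1}"])
    show "open (- {-1..1::real})" by auto
    show "\<xi> \<in> - {-1..1}" using assms by auto
    show "\<And>x. x \<in> - {- 1..1} \<Longrightarrow> 0 = h x" using supp by fastforce
  qed
  then show ?thesis using dh DERIV_unique by blast
qed

lemma alg1: "x \<noteq> (0::real) \<Longrightarrow> (d1 * s + c * x * h0) * (1/x) + (d2 * c + - s * x * d1) * (1/x\<^sup>2) = h0 * c + d2 * c / x\<^sup>2"
  by (simp add: field_simps power2_eq_square)

lemma ftc0: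
  assumes x: "x \<noteq> 0"
  shows "((\<lambda>\<eta>. h \<eta> * cos (x * \<eta>) + deriv (deriv h) \<eta> * cos (x * \<eta>) / x\<^sup>2) has_integral 0) {-2..2}"
proof -
  define F where "F \<eta> = h \<eta> * sin (x * \<eta>) * (1 / x) + deriv h \<eta> * cos (x * \<eta>) * (1 / x\<^sup>2)" for \<eta>
  have d: "(F has_field_derivative (h \<eta> * cos (x * \<eta>) + deriv (deriv h) \<eta> * cos (x * \<eta>) / x\<^sup>2)) (at \<eta>)" for \<eta>
  proof -
    have lin: "((\<lambda>\<eta>. x * \<eta>) has_field_derivative x) (at \<eta>)"
      using DERIV_cmult[where c=x, OF DERIV_ident] by simp
    have 1: "((\<lambda>\<eta>. h \<eta> * sin (x * \<eta>) * (1 / x)) has_field_derivative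
        (deriv h \<eta> * sin (x * \<eta>) + cos (x * \<eta>) * x * h \<eta>) * (1 / x)) (at \<eta>)"
      by (rule DERIV_cmult_right, rule DERIV_mult[OF dh DERIV_fun_sin[OF lin]])
    have 2: "((\<lambda>\<eta>. deriv h \<eta> * cos (x * \<eta>) * (1 / x\<^sup>2)) has_field_derivative
        (deriv (deriv h) \<eta> * cos (x * \<eta>) + - sin (x * \<eta>) * x * deriv h \<eta>) * (1 / x\<^sup>2)) (at \<eta>)"
      by (rule DERIV_cmult_right, rule DERIV_mult[OF ddh DERIV_fun_cos[OF lin]])
    have "(F has_field_derivative
        (deriv h \<eta> * sin (x * \<eta>) + cos (x * \<eta>) * x * h \<eta>) * (1 / x)
        + (deriv (deriv h) \<eta> * cos (x * \<eta>) + - sin (x * \<eta>) * x * deriv h \<eta>) * (1 / x\<^sup>2)) (at \<eta>)"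
      unfolding F_def[abs_def] by (rule DERIV_add[OF 1 2])
    then show ?thesis unfolding alg1[OF x] .
  qed
  have "((\<lambda>\<eta>. h \<eta> * cos (x * \<eta>) + deriv (deriv h) \<eta> * cos (x * \<eta>) / x\<^sup>2) has_integral (F 2 - F (-2))) {-2..2}"
    by (intro fundamental_theorem_of_calculus)
       (auto intro!: has_vector_derivative_at_within DERIV_subset[OF d] simp: has_real_derivative_iff_has_vector_derivative[symmetric])
  moreover have "F 2 = 0" "F (-2) = 0" unfolding F_def using supp[of 2] supp[of "-2"] dh_zero[of 2] dh_zero[of "-2"] by auto
  ultimately show ?thesis by simp
qed

lemma hcos_int: "integrable lborel (\<lambda>\<eta>. h \<eta> * cos (x * \<eta>))"
  by (rule Bochner_Integration.integrable_bound[OF h_int]) (auto intro!: cont_meas continuous_intros simp: abs_mult mult_left_le rng)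

lemma ReJ: "Re (J x) = (\<integral>\<eta>. h \<eta> * cos (x * \<eta>) \<partial>lborel)"
  unfolding J_def by (subst integral_Re[symmetric, OF hcis_int]) simp

lemma hcos_UNIV: "(\<integral>\<eta>. h \<eta> * cos (x * \<eta>) \<partial>lborel) = integral {-2..2} (\<lambda>\<eta>. h \<eta> * cos (x * \<eta>))"
proof -
  have "((\<lambda>\<eta>. h \<eta> * cos (x * \<eta>)) has_integral (\<integral>\<eta>. h \<eta> * cos (x * \<eta>) \<partial>lborel)) UNIV"
    by (rule has_integral_integral_lborel[OF hcos_int])
  moreover have eq: "(\<lambda>\<eta>. if \<eta> \<in> {-2..2} then h \<eta> * cos (x * \<eta>) else 0) = (\<lambda>\<eta>. h \<eta> * cos (x * \<eta>))"
    using supp by (force simp: fun_eq_iff)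
  ultimately have "((\<lambda>\<eta>. if \<eta> \<in> {-2..2} then h \<eta> * cos (x * \<eta>) else 0) has_integral (\<integral>\<eta>. h \<eta> * cos (x * \<eta>) \<partial>lborel)) UNIV"
    by (simp only: eq)
  then have "((\<lambda>\<eta>. h \<eta> * cos (x * \<eta>)) has_integral (\<integral>\<eta>. h \<eta> * cos (x * \<eta>) \<partial>lborel)) {-2..2}"
    by (rule has_integral_restrict_UNIV[THEN iffD1])
  then show ?thesis by (simp add: integral_unique)
qed

lemma decay: obtains B where "B > 0" "\<And>x. x \<noteq> 0 \<Longrightarrow> \<bar>Re (J x)\<bar> \<le> 4 * B / x\<^sup>2"
proof -
  have "compact (deriv (deriv h) ` {-2..2})"
    by (intro compact_continuous_image ddh_cont) auto
  then obtain B where B: "B > 0" "\<And>y. y \<in> deriv (deriv h) ` {-2..2} \<Longrightarrow> norm y \<le> B"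
    using compact_imp_bounded bounded_pos by metis
  show ?thesis
  proof (rule that[OF B(1)])
    fix x :: real assume x: "x \<noteq> 0"
    have i1: "(\<lambda>\<eta>. h \<eta> * cos (x * \<eta>)) integrable_on {-2..2}"
      by (intro integrable_continuous_interval continuous_intros)
    have i2: "(\<lambda>\<eta>. deriv (deriv h) \<eta> * cos (x * \<eta>) / x\<^sup>2) integrable_on {-2..2}"
      by (intro integrable_continuous_interval continuous_intros ddh_cont) (use x in auto)
    have "integral {-2..2} (\<lambda>\<eta>. h \<eta> * cos (x * \<eta>)) + integral {-2..2} (\<lambda>\<eta>. deriv (deriv h) \<eta> * cos (x * \<eta>) / x\<^sup>2) = 0"
      using integral_add[OF i1 i2] ftc0[OF x] by (simp add: integral_unique)
    then have e: "integral {-2..2} (\<lambda>\<eta>. h \<eta> * cos (x * \<eta>)) = - integral {-2..2} (\<lambda>\<eta>. deriv (deriv h) \<eta> * cos (x * \<eta>) / x\<^sup>2)"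
      by simp
    have "norm (integral (cbox (-2) 2) (\<lambda>\<eta>. deriv (deriv h) \<eta> * cos (x * \<eta>) / x\<^sup>2)) \<le> (B / x\<^sup>2) * Henstock_Kurzweil_Integration.content (cbox (-2::real) 2)"
    proof (rule has_integral_bound)
      show "0 \<le> B / x\<^sup>2" using B by simp
      show "((\<lambda>\<eta>. deriv (deriv h) \<eta> * cos (x * \<eta>) / x\<^sup>2) has_integral integral (cbox (- 2) 2) (\<lambda>\<eta>. deriv (deriv h) \<eta> * cos (x * \<eta>) / x\<^sup>2)) (cbox (- 2) 2)"
        using integrable_integral[OF i2] by (simp only: cbox_interval)
      fix \<eta> :: real assume "\<eta> \<in> cbox (-2) 2"
      then have "\<bar>deriv (deriv h) \<eta>\<bar> \<le> B" using B(2)[of "deriv (deriv h) \<eta>"] by auto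
      moreover have "\<bar>cos (x * \<eta>)\<bar> \<le> 1" by simp
      ultimately have "\<bar>deriv (deriv h) \<eta> * cos (x * \<eta>)\<bar> \<le> B"
        by (simp add: abs_mult mult_le_one[of "\<bar>_\<bar>"] mult_left_le order_trans[OF mult_left_le] )
      then show "norm (deriv (deriv h) \<eta> * cos (x * \<eta>) / x\<^sup>2) \<le> B / x\<^sup>2"
        by (simp add: abs_divide divide_right_mono)
    qed
    then show "\<bar>Re (J x)\<bar> \<le> 4 * B / x\<^sup>2"
      unfolding ReJ hcos_UNIV e by (simp add: mult.commute)
  qed
qed

lemma S_decay: obtains K where "K > 0" "\<And>x. \<bar>S x\<bar> \<le> K * inverse (1 + x\<^sup>2)"
proof -
  obtain B where B: "B > 0" "\<And>x. x \<noteq> 0 \<Longrightarrow> \<bar>Re (J x)\<bar> \<le> 4 * B / x\<^sup>2" using decay by blast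
  define K where "K = 2 * (S 0 + 4 * B / (2 * pi))"
  have K: "K > 0" unfolding K_def using S0_pos B by (auto intro!: add_pos_pos)
  show ?thesis
  proof (rule that[OF K])
    fix x :: real
    show "\<bar>S x\<bar> \<le> K * inverse (1 + x\<^sup>2)"
    proof (cases "\<bar>x\<bar> \<le> 1")
      case True
      then have "x\<^sup>2 \<le> 1" by (simp add: abs_square_le_1)
      moreover have p: "0 < 1 + x\<^sup>2" by (simp add: add_pos_nonneg)
      ultimately have "S 0 * (1 + x\<^sup>2) \<le> S 0 * 2" using S0_pos by (intro mult_left_mono) auto
      then have "2 * S 0 * inverse (1 + x\<^sup>2) \<ge> S 0" using p
        by (simp add: field_simps le_divide_eq)
      moreover have "2 * S 0 \<le> K" unfolding K_def using B by simp
      ultimately have "K * inverse (1 + x\<^sup>2) \<ge> S 0"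
        by (smt (verit) inverse_nonnegative_iff_nonnegative mult_right_mono power2_eq_square zero_le_square)
      then show ?thesis using S_bound[of x] by simp
    next
      case False
      then have x0: "x \<noteq> 0" and x1: "x\<^sup>2 \<ge> 1" by (auto simp add: abs_square_less_1 not_less[symmetric])
      have "\<bar>S x\<bar> = \<bar>Re (J x)\<bar> / (2 * pi)" by (simp add: S_J abs_divide)
      also have "\<dots> \<le> 4 * B / x\<^sup>2 / (2 * pi)" by (rule divide_right_mono[OF B(2)[OF x0]]) simp
      also have "\<dots> = (2 * B / pi) * inverse (x\<^sup>2)" by (simp add: field_simps)
      also have "\<dots> \<le> (2 * B / pi) * (2 * inverse (1 + x\<^sup>2))"
      proof (rule mult_left_mono)
        have "inverse (2 * x\<^sup>2) \<le> inverse (1 + x\<^sup>2)"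
          using x1 by (intro le_imp_inverse_le) (auto simp: add_pos_nonneg)
        then show "inverse (x\<^sup>2) \<le> 2 * inverse (1 + x\<^sup>2)" by simp
      qed (use B in simp)
      also have "\<dots> = 2 * (4 * B / (2 * pi)) * inverse (1 + x\<^sup>2)" by simp
      also have "\<dots> \<le> K * inverse (1 + x\<^sup>2)" unfolding K_def using S0_pos
        by (intro mult_right_mono) auto
      finally show ?thesis .
    qed
  qed
qed

lemma S_int: "integrable lborel S"
proof -
  obtain K where K: "K > 0" "\<And>x. \<bar>S x\<bar> \<le> K * inverse (1 + x\<^sup>2)" using S_decay by blast
  have "integrable lborel (\<lambda>x::real. inverse (1 + x^2))"
    using integrable_inverse_1_plus_square by (simp add: set_integrable_def einterval_def)
  then have "integrable lborel (\<lambda>x::real. K * inverse (1 + x^2))" by simp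
  then show ?thesis
    by (rule Bochner_Integration.integrable_bound) (use K in auto)
qed

end


lemma cis_meas[measurable]: "cis \<in> borel_measurable borel"
  by (intro borel_measurable_continuous_onI continuous_intros)

lemma gauss_ft:
  assumes s: "\<sigma> > 0"
  shows "(\<integral>x. complex_of_real (exp (-(\<sigma>*x)\<^sup>2/2)) * cis (x*w) \<partial>lborel)
         = complex_of_real (sqrt (2*pi) / \<sigma> * exp (-(w/\<sigma>)\<^sup>2/2))"
proof -
  let ?f = "\<lambda>x. complex_of_real (exp (-(\<sigma>*x)\<^sup>2/2)) * cis (x*w)"
  have "(\<integral>x. ?f x \<partial>lborel) = \<bar>1/\<sigma>\<bar> *\<^sub>R (\<integral>z. ?f (0 + 1/\<sigma> * z) \<partial>lborel)"
    by (rule lborel_integral_real_affine) (use s in simp)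
  also have "(\<lambda>z. ?f (0 + 1/\<sigma> * z)) = (\<lambda>z. complex_of_real (sqrt (2*pi)) * (std_normal_density z *\<^sub>R iexp ((w/\<sigma>) * z)))"
  proof
    fix z
    have eq1: "(0 + 1/\<sigma> * z) * w = (w/\<sigma>) * z" by simp
    have a1: "cis ((0 + 1/\<sigma> * z) * w) = iexp ((w/\<sigma>) * z)"
      by (simp only: eq1 cis_conv_exp)
    have eq2: "\<sigma> * (0 + 1/\<sigma> * z) = z" using s by simp
    have a2: "exp (-(\<sigma> * (0 + 1/\<sigma> * z))\<^sup>2/2) = sqrt (2*pi) * std_normal_density z"
      unfolding eq2 by (simp add: std_normal_density_def)
    show "?f (0 + 1/\<sigma> * z) = complex_of_real (sqrt (2*pi)) * (std_normal_density z *\<^sub>R iexp ((w/\<sigma>) * z))"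
      unfolding a1 a2 by (simp add: scaleR_conv_of_real)
  qed
  also have "(\<integral>z. complex_of_real (sqrt (2*pi)) * (std_normal_density z *\<^sub>R iexp ((w/\<sigma>) * z)) \<partial>lborel)
      = complex_of_real (sqrt (2*pi)) * char std_normal_distribution (w/\<sigma>)"
  proof -
    have "(\<integral>z. std_normal_density z *\<^sub>R iexp ((w/\<sigma>) * z) \<partial>lborel) = char std_normal_distribution (w/\<sigma>)"
      unfolding char_def by (rule integral_density[symmetric]) auto
    then show ?thesis by (simp only: integral_mult_right_zero)
  qed
  also have "\<dots> = complex_of_real (sqrt (2*pi) * exp (-(w/\<sigma>)\<^sup>2/2))"
    by (simp add: char_std_normal_distribution)
  finally show ?thesis using s by (simp add: scaleR_conv_of_real)
qed

lemma gauss_int: "\<sigma> \<noteq> 0 \<Longrightarrow> integrable lborel (\<lambda>x::real. exp (-(\<sigma>*x)\<^sup>2/2))"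
proof -
  assume s: "\<sigma> \<noteq> 0"
  have "integrable lborel (\<lambda>x. sqrt (2*pi) * std_normal_density (0 + \<sigma> * x))"
  proof (rule integrable_mult_right)
    have "integrable lborel std_normal_density" by simp
    then show "integrable lborel (\<lambda>x. std_normal_density (0 + \<sigma> * x))"
      by (rule lborel_integrable_real_affine[OF _ s])
  qed
  then show ?thesis by (simp add: std_normal_density_def)
qed

context goodh
begin

lemma sqrt2pi: "sqrt (2*pi) / (2*pi) = 1 / sqrt (2*pi)"
proof -
  have q: "sqrt (2*pi) * sqrt (2*pi) = 2*pi" by simp
  show ?thesis by (metis q divide_divide_eq_right div_by_1 divide_self_if mult.commute times_divide_eq_left nonzero_mult_div_cancel_left pi_neq_zero mult_eq_0_iff zero_neq_numeral)
qed

lemma alg2: "hh / (2*pi) * (sqrt (2*pi) / \<sigma> * E) = hh * (1 / sqrt (2*pi) * E) / (\<sigma>::real)"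
  using sqrt2pi by (metis (no_types, lifting) mult.assoc times_divide_eq_left times_divide_eq_right mult.commute)

lemma S_cJ: "complex_of_real (S x) = J x / complex_of_real (2 * pi)"
  using inv_eq[of x] unfolding inv_fourier_def J_def by simp

lemma G_eq:
  assumes s: "\<sigma> > 0"
  shows "(\<integral>x. complex_of_real (S x) * complex_of_real (exp (-(\<sigma>*x)\<^sup>2/2)) * cis (-(x*\<xi>)) \<partial>lborel)
       = complex_of_real (\<integral>z. h (\<xi> + \<sigma> * z) * std_normal_density z \<partial>lborel)"
proof -
  define e where "e x = exp (-(\<sigma>*x)\<^sup>2/2)" for x
  define F where "F x \<eta> = complex_of_real (h \<eta>) * cis (x * \<eta>) * (complex_of_real (e x) * cis (-(x*\<xi>)) / complex_of_real (2 * pi))" for x \<eta>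
  have e_int: "integrable lborel e" unfolding e_def using gauss_int[of \<sigma>] s by simp
  have e_meas[measurable]: "e \<in> borel_measurable borel" unfolding e_def by measurable
  have 1: "complex_of_real (S x) * complex_of_real (e x) * cis (-(x*\<xi>)) = (\<integral>\<eta>. F x \<eta> \<partial>lborel)" for x
    unfolding F_def S_cJ J_def by simp
  have Fm[measurable]: "(\<lambda>(x, \<eta>). F x \<eta>) \<in> borel_measurable (lborel \<Otimes>\<^sub>M lborel)"
    unfolding F_def by measurable
  have Fint: "integrable (lborel \<Otimes>\<^sub>M lborel) (\<lambda>(x, \<eta>). F x \<eta>)"
  proof (rule lborel_pair.Fubini_integrable)
    show "(\<lambda>(x, \<eta>). F x \<eta>) \<in> borel_measurable (lborel \<Otimes>\<^sub>M lborel)" by (rule Fm)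
    have n: "(\<integral>\<eta>. norm (case (x, \<eta>) of (x, \<eta>) \<Rightarrow> F x \<eta>) \<partial>lborel) = e x * integral\<^sup>L lborel h / (2 * pi)" for x
    proof -
      have "(\<lambda>\<eta>. norm (case (x, \<eta>) of (x, \<eta>) \<Rightarrow> F x \<eta>)) = (\<lambda>\<eta>. h \<eta> * (e x / (2 * pi)))"
        unfolding F_def e_def using rng by (auto simp: norm_mult norm_divide)
      then show ?thesis by simp
    qed
    show "integrable lborel (\<lambda>x. \<integral>\<eta>. norm (case (x, \<eta>) of (x, \<eta>) \<Rightarrow> F x \<eta>) \<partial>lborel)"
      unfolding n by (intro integrable_divide_zero integrable_mult_left e_int)
    show "AE x in lborel. integrable lborel (\<lambda>\<eta>. case (x, \<eta>) of (x, \<eta>) \<Rightarrow> F x \<eta>)"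
      unfolding F_def by (auto intro!: integrable_mult_left hcis_int)
  qed
  have "(\<integral>x. complex_of_real (S x) * complex_of_real (e x) * cis (-(x*\<xi>)) \<partial>lborel)
      = (\<integral>x. (\<integral>\<eta>. F x \<eta> \<partial>lborel) \<partial>lborel)" by (simp only: 1)
  also have "\<dots> = (\<integral>\<eta>. (\<integral>x. F x \<eta> \<partial>lborel) \<partial>lborel)"
    using lborel_pair.Fubini_integral[OF Fint] by simp
  also have "\<dots> = (\<integral>\<eta>. complex_of_real (h \<eta> * std_normal_density ((\<eta> - \<xi>) / \<sigma>) / \<sigma>) \<partial>lborel)"
  proof (rule Bochner_Integration.integral_cong[OF refl])
    fix \<eta> :: real
    have "(\<lambda>x. F x \<eta>) = (\<lambda>x. (complex_of_real (h \<eta>) / complex_of_real (2 * pi)) * (complex_of_real (exp (-(\<sigma>*x)\<^sup>2/2)) * cis (x * (\<eta> - \<xi>))))"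
      unfolding F_def e_def by (auto simp: fun_eq_iff cis_mult right_diff_distrib)
    then have "(\<integral>x. F x \<eta> \<partial>lborel) = (complex_of_real (h \<eta>) / complex_of_real (2 * pi)) * complex_of_real (sqrt (2*pi) / \<sigma> * exp (-((\<eta> - \<xi>)/\<sigma>)\<^sup>2/2))"
      using gauss_ft[OF s, of "\<eta> - \<xi>"] by simp
    also have "\<dots> = complex_of_real (h \<eta> * std_normal_density ((\<eta> - \<xi>) / \<sigma>) / \<sigma>)"
    proof -
      have "h \<eta> / (2*pi) * (sqrt (2*pi) / \<sigma> * exp (-((\<eta> - \<xi>)/\<sigma>)\<^sup>2/2))
          = h \<eta> * (1 / sqrt (2*pi) * exp (-((\<eta> - \<xi>)/\<sigma>)\<^sup>2/2)) / \<sigma>"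
        by (rule alg2)
      then show ?thesis
        by (simp add: std_normal_density_def flip: of_real_mult of_real_divide)
    qed
    finally show "(\<integral>x. F x \<eta> \<partial>lborel) = complex_of_real (h \<eta> * std_normal_density ((\<eta> - \<xi>) / \<sigma>) / \<sigma>)" .
  qed
  also have "\<dots> = complex_of_real (\<integral>\<eta>. h \<eta> * std_normal_density ((\<eta> - \<xi>) / \<sigma>) / \<sigma> \<partial>lborel)"
    by (rule integral_complex_of_real)
  also have "(\<integral>\<eta>. h \<eta> * std_normal_density ((\<eta> - \<xi>) / \<sigma>) / \<sigma> \<partial>lborel)
      = \<bar>\<sigma>\<bar> *\<^sub>R (\<integral>z. h (\<xi> + \<sigma> * z) * std_normal_density ((\<xi> + \<sigma> * z - \<xi>) / \<sigma>) / \<sigma> \<partial>lborel)"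
    by (rule lborel_integral_real_affine) (use s in simp)
  also have "\<dots> = (\<integral>z. h (\<xi> + \<sigma> * z) * std_normal_density z \<partial>lborel)"
    using s by simp
  finally show ?thesis unfolding e_def .
qed

theorem fourier_S: "fourier (\<lambda>x. complex_of_real (S x)) \<xi> = complex_of_real (h \<xi>)"
proof -
  define \<sigma> where "\<sigma> k = inverse (real (Suc k))" for k
  have \<sigma>pos: "\<sigma> k > 0" for k unfolding \<sigma>_def by simp
  have \<sigma>lim: "\<sigma> \<longlonglongrightarrow> 0" unfolding \<sigma>_def by (rule LIMSEQ_inverse_real_of_nat)
  define s where "s k x = complex_of_real (S x) * complex_of_real (exp (-(\<sigma> k*x)\<^sup>2/2)) * cis (-(x*\<xi>))" for k x
  have L1: "(\<lambda>k. integral\<^sup>L lborel (s k)) \<longlonglongrightarrow> fourier (\<lambda>x. complex_of_real (S x)) \<xi>"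
    unfolding fourier_def
  proof (rule integral_dominated_convergence[where w="\<lambda>x. \<bar>S x\<bar>"])
    show "(\<lambda>x. complex_of_real (S x) * cis (- (x * \<xi>))) \<in> borel_measurable lborel" by measurable
    show "\<And>k. s k \<in> borel_measurable lborel" unfolding s_def by measurable
    show "integrable lborel (\<lambda>x. \<bar>S x\<bar>)" by (intro integrable_abs S_int)
    show "AE x in lborel. (\<lambda>k. s k x) \<longlonglongrightarrow> complex_of_real (S x) * cis (- (x * \<xi>))"
    proof (intro AE_I2)
      fix x
      have "(\<lambda>k. complex_of_real (S x) * complex_of_real (exp (-(\<sigma> k*x)\<^sup>2/2)) * cis (-(x*\<xi>)))
          \<longlonglongrightarrow> complex_of_real (S x) * complex_of_real (exp (-(0*x)\<^sup>2/2)) * cis (-(x*\<xi>))"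
        by (intro tendsto_intros \<sigma>lim) auto
      then show "(\<lambda>k. s k x) \<longlonglongrightarrow> complex_of_real (S x) * cis (- (x * \<xi>))"
        unfolding s_def by simp
    qed
    show "\<And>k. AE x in lborel. norm (s k x) \<le> \<bar>S x\<bar>"
    proof (intro AE_I2)
      fix k x
      have "exp (-(\<sigma> k*x)\<^sup>2/2) \<le> 1" by simp
      then show "norm (s k x) \<le> \<bar>S x\<bar>" unfolding s_def
        by (simp add: norm_mult mult_left_le)
    qed
  qed
  define g where "g k = (\<integral>z. h (\<xi> + \<sigma> k * z) * std_normal_density z \<partial>lborel)" for k
  have L2: "g \<longlonglongrightarrow> (\<integral>z. h \<xi> * std_normal_density z \<partial>lborel)"
    unfolding g_def
  proof (rule integral_dominated_convergence[where w="std_normal_density"])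
    show "(\<lambda>z. h \<xi> * std_normal_density z) \<in> borel_measurable lborel" by measurable
    show "\<And>k. (\<lambda>z. h (\<xi> + \<sigma> k * z) * std_normal_density z) \<in> borel_measurable lborel" by measurable
    show "integrable lborel std_normal_density" by simp
    show "AE z in lborel. (\<lambda>k. h (\<xi> + \<sigma> k * z) * std_normal_density z) \<longlonglongrightarrow> h \<xi> * std_normal_density z"
    proof (intro AE_I2)
      fix z
      have "(\<lambda>k. \<xi> + \<sigma> k * z) \<longlonglongrightarrow> \<xi> + 0 * z" by (intro tendsto_intros \<sigma>lim)
      then have "(\<lambda>k. h (\<xi> + \<sigma> k * z)) \<longlonglongrightarrow> h \<xi>"
        using isCont_tendsto_compose[OF h_isCont] by simp
      then show "(\<lambda>k. h (\<xi> + \<sigma> k * z) * std_normal_density z) \<longlonglongrightarrow> h \<xi> * std_normal_density z"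
        by (intro tendsto_intros)
    qed
    show "\<And>k. AE z in lborel. norm (h (\<xi> + \<sigma> k * z) * std_normal_density z) \<le> std_normal_density z"
      using rng by (auto intro!: AE_I2 simp: abs_mult mult_left_le_one_le)
  qed
  have "(\<integral>z. h \<xi> * std_normal_density z \<partial>lborel) = h \<xi>" by simp
  with L2 have "(\<lambda>k. complex_of_real (g k)) \<longlonglongrightarrow> complex_of_real (h \<xi>)"
    by (auto intro: tendsto_of_real)
  moreover have "integral\<^sup>L lborel (s k) = complex_of_real (g k)" for k
    unfolding s_def g_def by (rule G_eq[OF \<sigma>pos])
  ultimately have "(\<lambda>k. integral\<^sup>L lborel (s k)) \<longlonglongrightarrow> complex_of_real (h \<xi>)" by simp
  with L1 show ?thesis using LIMSEQ_unique by blast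
qed

end


context goodh
begin

lemma Scis_int: "integrable lborel (\<lambda>x. complex_of_real (S x) * cis (-(x * c)))"
  by (rule Bochner_Integration.integrable_bound[OF S_int]) (measurable, simp add: norm_mult)

lemma fourier_Scos:
  "(\<integral>x. complex_of_real (S x * cos (a*x)) * cis (-(x*\<xi>)) \<partial>lborel) = complex_of_real ((h (\<xi> - a) + h (\<xi> + a))/2)"
proof -
  have e: "complex_of_real (S x * cos (a*x)) * cis (-(x*\<xi>)) =
     (complex_of_real (S x) * cis (-(x*(\<xi> - a))) + complex_of_real (S x) * cis (-(x*(\<xi> + a)))) / 2" for x
  proof -
    have "complex_of_real (cos (a*x)) = (cis (a*x) + cis (-(a*x))) / 2"
      by (simp add: complex_eq_iff)
    moreover have "cis (a*x) * cis (-(x*\<xi>)) = cis (-(x*(\<xi> - a)))" "cis (-(a*x)) * cis (-(x*\<xi>)) = cis (-(x*(\<xi> + a)))"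
      by (simp_all add: cis_mult algebra_simps)
    ultimately show ?thesis by (simp add: algebra_simps add_divide_distrib)
  qed
  have i1: "integrable lborel (\<lambda>x. complex_of_real (S x) * cis (-(x*(\<xi> - a))))"
    by (rule Scis_int)
  have i2: "integrable lborel (\<lambda>x. complex_of_real (S x) * cis (-(x*(\<xi> + a))))"
    by (rule Scis_int)
  have "(\<integral>x. complex_of_real (S x * cos (a*x)) * cis (-(x*\<xi>)) \<partial>lborel)
     = ((\<integral>x. complex_of_real (S x) * cis (-(x*(\<xi> - a))) \<partial>lborel) + (\<integral>x. complex_of_real (S x) * cis (-(x*(\<xi> + a))) \<partial>lborel)) / 2"
    unfolding e by (simp add: Bochner_Integration.integral_add[OF i1 i2])
  also have "\<dots> = (complex_of_real (h (\<xi> - a)) + complex_of_real (h (\<xi> + a))) / 2"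
    using fourier_S[of "\<xi> - a"] fourier_S[of "\<xi> + a"] unfolding fourier_def by simp
  finally show ?thesis by simp
qed

lemma hshift_int: "integrable lborel (\<lambda>\<xi>. complex_of_real (h (\<xi> + t)) * cis (x * \<xi>))"
proof -
  have "integrable lborel (\<lambda>\<xi>. h (t + 1 * \<xi>))"
    by (rule lborel_integrable_real_affine[OF h_int]) simp
  then have "integrable lborel (\<lambda>\<xi>. h (\<xi> + t))" by (simp add: add.commute)
  then show ?thesis
    by (rule Bochner_Integration.integrable_bound)
       (auto intro!: cont_meas continuous_intros h_cont simp: norm_mult)
qed

lemma J_shift: "(\<integral>\<xi>. complex_of_real (h (\<xi> + t)) * cis (x * \<xi>) \<partial>lborel) = cis (- (x * t)) * J x"
proof -
  have "J x = \<bar>1\<bar> *\<^sub>R (\<integral>\<xi>. complex_of_real (h (t + 1 * \<xi>)) * cis (x * (t + 1 * \<xi>)) \<partial>lborel)"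
    unfolding J_def by (rule lborel_integral_real_affine) simp
  also have "\<dots> = (\<integral>\<xi>. cis (x * t) * (complex_of_real (h (\<xi> + t)) * cis (x * \<xi>)) \<partial>lborel)"
  proof -
    have pw: "complex_of_real (h (t + 1 * \<xi>)) * cis (x * (t + 1 * \<xi>)) = cis (x * t) * (complex_of_real (h (\<xi> + t)) * cis (x * \<xi>))" for \<xi>
    proof -
      have "cis (x * (t + 1 * \<xi>)) = cis (x * t) * cis (x * \<xi>)" by (simp add: cis_mult distrib_left)
      then show ?thesis by (simp add: add.commute mult.left_commute)
    qed
    show ?thesis by (simp only: pw scaleR_one abs_one)
  qed
  also have "\<dots> = cis (x * t) * (\<integral>\<xi>. complex_of_real (h (\<xi> + t)) * cis (x * \<xi>) \<partial>lborel)"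
    by (rule integral_mult_right_zero)
  finally have "J x = cis (x * t) * (\<integral>\<xi>. complex_of_real (h (\<xi> + t)) * cis (x * \<xi>) \<partial>lborel)" .
  then have "cis (- (x * t)) * J x = cis (- (x * t)) * cis (x * t) * (\<integral>\<xi>. complex_of_real (h (\<xi> + t)) * cis (x * \<xi>) \<partial>lborel)"
    by simp
  also have "cis (- (x * t)) * cis (x * t) = 1" by (simp add: cis_mult)
  finally show ?thesis by simp
qed

lemma inv_fourier_mod:
  "inv_fourier (\<lambda>\<xi>. complex_of_real ((h (\<xi> - a) + h (\<xi> + a))/2)) x = complex_of_real (S x * cos (a*x))"
proof -
  have e: "complex_of_real ((h (\<xi> - a) + h (\<xi> + a))/2) * cis (x * \<xi>) =
     (complex_of_real (h (\<xi> + - a)) * cis (x * \<xi>) + complex_of_real (h (\<xi> + a)) * cis (x * \<xi>)) / 2" for \<xi>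
    by (simp add: algebra_simps add_divide_distrib)
  have "(\<integral>\<xi>. complex_of_real ((h (\<xi> - a) + h (\<xi> + a))/2) * cis (x * \<xi>) \<partial>lborel)
      = ((\<integral>\<xi>. complex_of_real (h (\<xi> + - a)) * cis (x * \<xi>) \<partial>lborel) + (\<integral>\<xi>. complex_of_real (h (\<xi> + a)) * cis (x * \<xi>) \<partial>lborel)) / 2"
    unfolding e by (simp only: integral_divide_zero Bochner_Integration.integral_add[OF hshift_int hshift_int])
  also have "\<dots> = (cis (x * a) + cis (- (x * a))) / 2 * J x"
    unfolding J_shift J_shift[of "-a", simplified] by (simp add: algebra_simps add_divide_distrib)
  also have "(cis (x * a) + cis (- (x * a))) / 2 = complex_of_real (cos (a * x))"
    by (simp add: complex_eq_iff mult.commute)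
  finally have "(\<integral>\<xi>. complex_of_real ((h (\<xi> - a) + h (\<xi> + a))/2) * cis (x * \<xi>) \<partial>lborel) = complex_of_real (cos (a * x)) * J x" .
  then show ?thesis unfolding inv_fourier_def by (simp add: S_cJ)
qed

end

lemma cos_diff_le: "\<bar>cos u - cos v\<bar> \<le> \<bar>u - v :: real\<bar>"
proof -
  have "\<bar>cos u - cos v\<bar> = \<bar>Re (cis u - cis v)\<bar>" by simp
  also have "\<dots> \<le> cmod (cis u - cis v)" by (rule abs_Re_le_cmod)
  also have "\<dots> \<le> \<bar>u - v\<bar>"
  proof -
    have "cis v * cis (u - v) = cis u" by (simp add: cis_mult)
    then have "cis u - cis v = cis v * (cis (u - v) - 1)"
      by (simp add: right_diff_distrib)
    then have "cmod (cis u - cis v) = cmod (cis (u - v) - 1)" by (simp add: norm_mult)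
    also have "\<dots> \<le> \<bar>u - v\<bar>"
      using iexp_approx1[of "u - v" 0] by (simp add: cis_conv_exp)
    finally show ?thesis .
  qed
  finally show ?thesis .
qed


definition cc :: "real \<Rightarrow> nat \<Rightarrow> real" where "cc s j = 2 powr (- real (j + 3) * s)"
definition aa :: "nat \<Rightarrow> real" where "aa j = 11 / 8 * 2 ^ (j + 3)"

lemma cc_pow: "cc s j = (2 powr (- s)) ^ (j + 3)"
proof -
  have "(2 powr (- s)) ^ (j + 3) = (2 powr (- s)) powr real (j + 3)"
    by (rule powr_realpow[symmetric]) simp
  also have "\<dots> = 2 powr (- s * real (j + 3))" by (simp only: powr_powr)
  also have "- s * real (j + 3) = - real (j + 3) * s" by (simp add: algebra_simps)
  finally show ?thesis unfolding cc_def by simp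
qed

lemma cc_pos: "cc s j > 0" unfolding cc_def by simp

lemma cc_aa: "cc s j * aa j = 11 / 8 * (2 powr (1 - s)) ^ (j + 3)"
proof -
  have "2 powr (1 - s) = 2 * 2 powr (- s)" by (simp add: powr_diff powr_minus divide_inverse)
  then show ?thesis unfolding cc_pow aa_def by (simp add: power_mult_distrib)
qed

lemma summable_shift3: "norm (r::real) < 1 \<Longrightarrow> summable (\<lambda>j. r ^ (j + 3))"
  using summable_mult[OF summable_geometric[of r], of "r^3"] by (simp add: power_add mult.commute)

lemma pow_lt1: "t < 0 \<Longrightarrow> 2 powr t < (1::real)"
  using powr_less_mono[of t 0 2] by simp

lemma summable_cc: "s > 0 \<Longrightarrow> summable (cc s)"
  unfolding cc_pow by (intro summable_shift3) (simp add: pow_lt1)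

lemma summable_cc_aa: "s > 1 \<Longrightarrow> summable (\<lambda>j. cc s j * aa j)"
  unfolding cc_aa by (intro summable_mult summable_shift3) (simp add: pow_lt1)

lemma aa_pos: "aa j > 0" unfolding aa_def by simp

lemma suminf_abs_le': "(\<And>j. \<bar>f j\<bar> \<le> g j) \<Longrightarrow> summable g \<Longrightarrow> \<bar>suminf f\<bar> \<le> suminf (g :: nat \<Rightarrow> real)"
proof -
  assume fg: "\<And>j. \<bar>f j\<bar> \<le> g j" and g: "summable g"
  have sa: "summable (\<lambda>j. \<bar>f j\<bar>)" by (rule summable_comparison_test'[OF g]) (use fg in auto)
  have "\<bar>suminf f\<bar> \<le> (\<Sum>j. \<bar>f j\<bar>)" by (rule summable_rabs[OF sa])
  also have "\<dots> \<le> suminf g" by (rule suminf_le[OF fg sa g])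
  finally show ?thesis .
qed

locale mainloc = A: goodh \<phi>h "-1/4" "1/4" + B: goodh \<psi>h "1/2" "5/8" for \<phi>h \<psi>h +
  fixes th :: "real \<Rightarrow> real" and s :: real
  assumes th_supp: "\<And>\<xi>. \<bar>\<xi>\<bar> > 4/3 \<Longrightarrow> th \<xi> = 0"
    and th_one: "\<And>\<xi>. \<bar>\<xi>\<bar> \<le> 3/4 \<Longrightarrow> th \<xi> = 1"
    and ph_zero: "\<And>\<xi>. \<bar>\<xi>\<bar> \<ge> 1/2 \<Longrightarrow> \<phi>h \<xi> = 0"
    and ps_zero: "\<And>\<xi>. \<bar>\<xi>\<bar> \<ge> 3/4 \<Longrightarrow> \<psi>h \<xi> = 0"
    and s1: "s > 1"
begin

definition K where "K = gam s / schw_of \<phi>h 0"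

lemma gam_gt4: "gam s > 4"
proof -
  have "2 powr (2 * s) > 2 powr 2" using s1 by (intro powr_less_mono) auto
  then have a: "2 powr (2 * s) > 4" by simp
  have "2 powr s > 2 powr 1" using s1 by (intro powr_less_mono) auto
  then have b: "2 powr s - 1 > 1" by simp
  have "4 * 1 < 2 powr (2 * s) * (2 powr s - 1)" using a b by (intro mult_strict_mono) auto
  then show ?thesis unfolding gam_def by simp
qed

lemma K_pos: "K > 0" unfolding K_def using gam_gt4 A.S0_pos by simp

lemma phit: "phi_tilde \<phi>h s x = K * schw_of \<phi>h x"
  unfolding phi_tilde_def K_def by simp

lemma phit_bound: "\<bar>phi_tilde \<phi>h s x\<bar> \<le> gam s"
proof -
  have "\<bar>phi_tilde \<phi>h s x\<bar> = K * \<bar>schw_of \<phi>h x\<bar>" using K_pos by (simp add: phit abs_mult)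
  also have "\<dots> \<le> K * schw_of \<phi>h 0" using A.S_bound K_pos by (intro mult_left_mono) auto
  also have "\<dots> = gam s" unfolding K_def using A.S0_pos by simp
  finally show ?thesis .
qed

lemma phit_lip: "\<bar>phi_tilde \<phi>h s x - phi_tilde \<phi>h s y\<bar> \<le> gam s * \<bar>x - y\<bar>"
proof -
  have "\<bar>phi_tilde \<phi>h s x - phi_tilde \<phi>h s y\<bar> = K * \<bar>schw_of \<phi>h x - schw_of \<phi>h y\<bar>"
    using K_pos by (simp add: phit abs_mult flip: right_diff_distrib)
  also have "\<dots> \<le> K * (schw_of \<phi>h 0 * \<bar>x - y\<bar>)" using A.S_lip K_pos by (intro mult_left_mono) auto
  also have "\<dots> = gam s * \<bar>x - y\<bar>" unfolding K_def using A.S0_pos by simp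
  finally show ?thesis .
qed

definition tm where "tm j x = cc s j * phi_tilde \<phi>h s x * cos (aa j * x)"

lemma u0_eq: "u0 \<phi>h s x = (\<Sum>j. tm j x)"
  unfolding u0_def tm_def cc_def aa_def ..

lemma tm_bound: "\<bar>tm j x\<bar> \<le> cc s j * gam s"
proof -
  have "\<bar>tm j x\<bar> = cc s j * (\<bar>phi_tilde \<phi>h s x\<bar> * \<bar>cos (aa j * x)\<bar>)"
    unfolding tm_def using cc_pos[of s j] by (simp add: abs_mult)
  also have "\<dots> \<le> cc s j * (gam s * 1)"
    using cc_pos[of s j] phit_bound gam_gt4 by (intro mult_left_mono mult_mono) auto
  finally show ?thesis by simp
qed

lemma summable_cc': "summable (cc s)" using summable_cc s1 by simp

lemma summable_tm: "summable (\<lambda>j. tm j x)"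
  by (rule summable_comparison_test'[where g="\<lambda>j. cc s j * gam s"])
     (use summable_mult2[OF summable_cc'] tm_bound in auto)

definition Bu where "Bu = gam s * (\<Sum>j. cc s j)"

lemma u0_bound: "\<bar>u0 \<phi>h s x\<bar> \<le> Bu"
proof -
  have s2: "summable (\<lambda>j. cc s j * gam s)" using summable_cc' by (rule summable_mult2)
  have "\<bar>u0 \<phi>h s x\<bar> = \<bar>\<Sum>j. tm j x\<bar>" by (simp add: u0_eq)
  also have "\<dots> \<le> (\<Sum>j. cc s j * gam s)"
    by (rule suminf_abs_le') (use s2 tm_bound in auto)
  finally show ?thesis unfolding Bu_def using suminf_mult2[OF summable_cc', of "gam s"] by (simp add: mult.commute)
qed

definition Lu where "Lu = gam s * (\<Sum>j. cc s j * (1 + aa j))"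

lemma summable_L: "summable (\<lambda>j. cc s j * (1 + aa j))"
  using summable_add[OF summable_cc' summable_cc_aa[OF s1]] by (simp add: distrib_left)

lemma Lu_nonneg: "Lu \<ge> 0"
  unfolding Lu_def using gam_gt4 cc_pos aa_pos
  by (intro mult_nonneg_nonneg suminf_nonneg summable_L) (auto intro: less_imp_le simp: aa_def)

lemma tm_lip: "\<bar>tm j x - tm j y\<bar> \<le> gam s * (cc s j * (1 + aa j)) * \<bar>x - y\<bar>"
proof -
  let ?p = "phi_tilde \<phi>h s"
  have e: "tm j x - tm j y = cc s j * ((?p x - ?p y) * cos (aa j * x) + ?p y * (cos (aa j * x) - cos (aa j * y)))"
    unfolding tm_def by (simp add: algebra_simps)
  have "\<bar>(?p x - ?p y) * cos (aa j * x)\<bar> \<le> gam s * \<bar>x - y\<bar>"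
    using phit_lip[of x y] by (simp add: abs_mult mult_le_one order_trans[OF mult_right_le_one_le] )
  moreover have "\<bar>?p y * (cos (aa j * x) - cos (aa j * y))\<bar> \<le> gam s * (aa j * \<bar>x - y\<bar>)"
  proof -
    have "\<bar>cos (aa j * x) - cos (aa j * y)\<bar> \<le> \<bar>aa j * x - aa j * y\<bar>" by (rule cos_diff_le)
    also have "\<dots> = aa j * \<bar>x - y\<bar>" using aa_pos[of j] by (simp add: abs_mult flip: right_diff_distrib)
    finally show ?thesis unfolding abs_mult using phit_bound[of y]
      by (intro mult_mono) auto
  qed
  ultimately have "\<bar>(?p x - ?p y) * cos (aa j * x) + ?p y * (cos (aa j * x) - cos (aa j * y))\<bar> \<le> gam s * \<bar>x - y\<bar> + gam s * (aa j * \<bar>x - y\<bar>)"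
    by (rule order_trans[OF abs_triangle_ineq add_mono])
  then have "\<bar>tm j x - tm j y\<bar> \<le> cc s j * (gam s * \<bar>x - y\<bar> + gam s * (aa j * \<bar>x - y\<bar>))"
    unfolding e abs_mult using cc_pos[of s j] by (simp add: mult_left_mono)
  then show ?thesis by (simp add: algebra_simps)
qed

lemma u0_lip: "\<bar>u0 \<phi>h s x - u0 \<phi>h s y\<bar> \<le> Lu * \<bar>x - y\<bar>"
proof -
  have s2: "summable (\<lambda>j. gam s * (cc s j * (1 + aa j)) * \<bar>x - y\<bar>)"
    by (intro summable_mult summable_mult2 summable_L)
  have "u0 \<phi>h s x - u0 \<phi>h s y = (\<Sum>j. tm j x - tm j y)"
    unfolding u0_eq by (rule suminf_diff[OF summable_tm summable_tm])
  then have "\<bar>u0 \<phi>h s x - u0 \<phi>h s y\<bar> \<le> (\<Sum>j. gam s * (cc s j * (1 + aa j)) * \<bar>x - y\<bar>)"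
    using suminf_abs_le'[OF tm_lip s2] by simp
  also have "\<dots> = Lu * \<bar>x - y\<bar>" unfolding Lu_def
    using suminf_mult2[OF summable_mult[OF summable_L, of "gam s"], of "\<bar>x - y\<bar>"]
      suminf_mult[OF summable_L, of "gam s"] by simp
  finally show ?thesis .
qed

lemma u0_cont[continuous_intros]: "continuous_on A (u0 \<phi>h s)"
proof -
  have "Lu-lipschitz_on A (u0 \<phi>h s)"
    by (intro lipschitz_onI) (auto simp: dist_real_def u0_lip Lu_nonneg)
  then show ?thesis by (rule lipschitz_on_continuous_on)
qed

lemma u0_meas[measurable]: "u0 \<phi>h s \<in> borel_measurable borel"
  by (intro borel_measurable_continuous_onI u0_cont)

end


context mainloc
begin

definition TT where "TT j \<xi> = cc s j * K * ((\<phi>h (\<xi> - aa j) + \<phi>h (\<xi> + aa j)) / 2)"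

lemma TT_bound: "\<bar>TT j \<xi>\<bar> \<le> cc s j * K"
proof -
  have "\<bar>(\<phi>h (\<xi> - aa j) + \<phi>h (\<xi> + aa j)) / 2\<bar> \<le> 1"
    using A.rng[of "\<xi> - aa j"] A.rng[of "\<xi> + aa j"] by auto
  then show ?thesis unfolding TT_def using cc_pos[of s j] K_pos
    by (simp add: abs_mult mult_left_le)
qed

lemma summable_TT: "summable (\<lambda>j. TT j \<xi>)"
  by (rule summable_comparison_test'[where g="\<lambda>j. cc s j * K"])
     (use summable_mult2[OF summable_cc'] TT_bound in auto)

lemma tm_eq: "tm j x = (cc s j * K) * (schw_of \<phi>h x * cos (aa j * x))"
  unfolding tm_def phit by simp

lemma fourier_u0: "fourier (\<lambda>x. complex_of_real (u0 \<phi>h s x)) \<xi> = complex_of_real (\<Sum>j. TT j \<xi>)"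
proof -
  define f where "f j x = complex_of_real (tm j x) * cis (-(x*\<xi>))" for j x
  have fm[measurable]: "f j \<in> borel_measurable lborel" for j
    unfolding f_def tm_eq by measurable
  have nf: "norm (f j x) = \<bar>tm j x\<bar>" for j x unfolding f_def by (simp add: norm_mult)
  have Sabs: "integrable lborel (\<lambda>x. \<bar>schw_of \<phi>h x\<bar>)" by (intro integrable_abs A.S_int)
  have fint: "integrable lborel (f j)" for j
  proof (rule Bochner_Integration.integrable_bound[OF integrable_mult_right[OF Sabs, of "cc s j * K"] fm])
    show "AE x in lborel. norm (f j x) \<le> norm (cc s j * K * \<bar>schw_of \<phi>h x\<bar>)"
    proof (intro AE_I2)
      fix x
      have "\<bar>tm j x\<bar> \<le> cc s j * K * \<bar>schw_of \<phi>h x\<bar>"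
        unfolding tm_eq abs_mult using cc_pos[of s j] K_pos
        by (simp add: mult_left_le)
      then show "norm (f j x) \<le> norm (cc s j * K * \<bar>schw_of \<phi>h x\<bar>)"
        unfolding nf using cc_pos[of s j] K_pos by simp
    qed
  qed
  define IS where "IS = (\<integral>x. \<bar>schw_of \<phi>h x\<bar> \<partial>lborel)"
  have intnorm: "(\<integral>x. norm (f j x) \<partial>lborel) \<le> cc s j * K * IS" for j
  proof -
    have "(\<integral>x. norm (f j x) \<partial>lborel) \<le> (\<integral>x. cc s j * K * \<bar>schw_of \<phi>h x\<bar> \<partial>lborel)"
    proof (rule integral_mono)
      show "integrable lborel (\<lambda>x. norm (f j x))" by (intro integrable_norm fint)
      show "integrable lborel (\<lambda>x. cc s j * K * \<bar>schw_of \<phi>h x\<bar>)" by (intro integrable_mult_right Sabs)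
      fix x
      show "norm (f j x) \<le> cc s j * K * \<bar>schw_of \<phi>h x\<bar>"
        unfolding nf tm_eq abs_mult using cc_pos[of s j] K_pos by (simp add: mult_left_le)
    qed
    then show ?thesis unfolding IS_def by simp
  qed
  have sum1: "summable (\<lambda>j. \<integral>x. norm (f j x) \<partial>lborel)"
  proof (rule summable_comparison_test'[where g="\<lambda>j. cc s j * (K * IS)"])
    show "summable (\<lambda>j. cc s j * (K * IS))" by (rule summable_mult2[OF summable_cc'])
    fix j
    have "0 \<le> (\<integral>x. norm (f j x) \<partial>lborel)" by simp
    then show "norm (\<integral>x. norm (f j x) \<partial>lborel) \<le> cc s j * (K * IS)" using intnorm[of j] by simp
  qed
  have sum2: "AE x in lborel. summable (\<lambda>j. norm (f j x))"
  proof (intro AE_I2)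
    fix x show "summable (\<lambda>j. norm (f j x))" unfolding nf
      by (rule summable_comparison_test'[where g="\<lambda>j. cc s j * gam s"])
         (use summable_mult2[OF summable_cc'] tm_bound in auto)
  qed
  have lhs: "complex_of_real (u0 \<phi>h s x) * cis (-(x*\<xi>)) = (\<Sum>j. f j x)" for x
  proof -
    have "(\<lambda>j. tm j x) sums u0 \<phi>h s x" unfolding u0_eq using summable_tm by (rule summable_sums)
    then have "(\<lambda>j. complex_of_real (tm j x)) sums complex_of_real (u0 \<phi>h s x)" by (rule sums_of_real)
    then have "(\<lambda>j. f j x) sums (complex_of_real (u0 \<phi>h s x) * cis (-(x*\<xi>)))"
      unfolding f_def by (rule sums_mult2)
    then show ?thesis by (rule sums_unique)
  qed
  have each: "integral\<^sup>L lborel (f j) = complex_of_real (TT j \<xi>)" for j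
  proof -
    have "f j = (\<lambda>x. complex_of_real (cc s j * K) * (complex_of_real (schw_of \<phi>h x * cos (aa j * x)) * cis (-(x*\<xi>))))"
      unfolding f_def tm_eq by (simp add: fun_eq_iff)
    then have "integral\<^sup>L lborel (f j) = complex_of_real (cc s j * K) * complex_of_real ((\<phi>h (\<xi> - aa j) + \<phi>h (\<xi> + aa j))/2)"
      by (simp only: integral_mult_right_zero A.fourier_Scos)
    then show ?thesis unfolding TT_def by simp
  qed
  have "fourier (\<lambda>x. complex_of_real (u0 \<phi>h s x)) \<xi> = (\<integral>x. (\<Sum>j. f j x) \<partial>lborel)"
    unfolding fourier_def lhs ..
  also have "\<dots> = (\<Sum>j. integral\<^sup>L lborel (f j))"
    by (rule integral_suminf[OF fint sum2 sum1])
  also have "\<dots> = complex_of_real (\<Sum>j. TT j \<xi>)"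
    unfolding each using sums_of_real[OF summable_sums[OF summable_TT]] by (rule sums_unique[symmetric])
  finally show ?thesis .
qed

end


context mainloc
begin

lemma mm_eq: "lp_varphi th (\<xi> / 2 powr real_of_int (int n)) = th (\<xi> / 2^n / 2) - th (\<xi> / 2^n)"
  unfolding lp_varphi_def by (simp add: powr_realpow)

lemma gt_div: "P > 0 \<Longrightarrow> \<bar>\<xi>\<bar> > c * P \<Longrightarrow> \<bar>\<xi> / P\<bar> > (c::real)"
  by (simp add: abs_divide pos_less_divide_eq)

lemma le_div: "P > 0 \<Longrightarrow> \<bar>\<xi>\<bar> \<le> c * P \<Longrightarrow> \<bar>\<xi> / P\<bar> \<le> (c::real)"
  by (simp add: abs_divide pos_divide_le_eq)

lemma near_aa:
  assumes "TT j \<xi> \<noteq> 0"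
  shows "aa j - 1/2 < \<bar>\<xi>\<bar>" "\<bar>\<xi>\<bar> < aa j + 1/2"
proof -
  from assms have "\<phi>h (\<xi> - aa j) \<noteq> 0 \<or> \<phi>h (\<xi> + aa j) \<noteq> 0" unfolding TT_def by auto
  then have "\<bar>\<xi> - aa j\<bar> < 1/2 \<or> \<bar>\<xi> + aa j\<bar> < 1/2" using ph_zero by force
  note * = this aa_pos[of j]
  show "aa j - 1/2 < \<bar>\<xi>\<bar>" using * by (smt (verit))
  show "\<bar>\<xi>\<bar> < aa j + 1/2" using * by (smt (verit))
qed

lemma mult_TT:
  assumes n: "n \<ge> 4"
  shows "lp_varphi th (\<xi> / 2 powr real_of_int (int n)) * TT j \<xi> = (if j = n - 3 then TT j \<xi> else 0)"
proof (cases "TT j \<xi> = 0")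
  case True then show ?thesis by auto
next
  case False
  note nr = near_aa[OF False]
  define P :: real where "P = 2 ^ n"
  have P16: "P \<ge> 16" unfolding P_def using power_increasing[OF n, of "2::real"] by simp
  have P0: "P > 0" "2 * P > 0" using P16 by auto
  have mm: "lp_varphi th (\<xi> / 2 powr real_of_int (int n)) = th (\<xi> / (2 * P)) - th (\<xi> / P)"
    unfolding mm_eq P_def by (simp add: mult.commute)
  consider "j = n - 3" | "j > n - 3" | "j < n - 3" by linarith
  then show ?thesis
  proof cases
    case 1
    have a: "aa j = 11/8 * P" unfolding aa_def P_def using 1 n by simp
    have "th (\<xi> / P) = 0" using nr a P16 by (intro th_supp gt_div P0) auto
    moreover have "th (\<xi> / (2 * P)) = 1" using nr a P16 by (intro th_one le_div P0) auto
    ultimately show ?thesis using 1 mm by simp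
  next
    case 2
    have "(2::real) ^ (n + 1) \<le> 2 ^ (j + 3)" using 2 by (intro power_increasing) auto
    then have a: "aa j \<ge> 11/4 * P" unfolding aa_def P_def by simp
    have "th (\<xi> / P) = 0" using nr a P16 by (intro th_supp gt_div P0) auto
    moreover have "th (\<xi> / (2 * P)) = 0" using nr a P16 by (intro th_supp gt_div P0) auto
    ultimately show ?thesis using 2 mm by simp
  next
    case 3
    have "(2::real) ^ (j + 4) \<le> 2 ^ n" using 3 by (intro power_increasing) auto
    then have "2 * (2::real) ^ (j + 3) \<le> 2 ^ n" by (simp add: power_add)
    then have a: "aa j \<le> 11/16 * P" unfolding aa_def P_def by simp
    have "th (\<xi> / P) = 1" using nr a P16 by (intro th_one le_div P0) auto
    moreover have "th (\<xi> / (2 * P)) = 1" using nr a P16 by (intro th_one le_div P0) auto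
    ultimately show ?thesis using 3 mm by simp
  qed
qed

lemma mult_fourier_u0:
  assumes n: "n \<ge> 4"
  shows "complex_of_real (lp_varphi th (\<xi> / 2 powr real_of_int (int n))) * fourier (\<lambda>x. complex_of_real (u0 \<phi>h s x)) \<xi>
       = complex_of_real (TT (n - 3) \<xi>)"
proof -
  let ?m = "lp_varphi th (\<xi> / 2 powr real_of_int (int n))"
  have "?m * (\<Sum>j. TT j \<xi>) = (\<Sum>j. ?m * TT j \<xi>)" by (rule suminf_mult[OF summable_TT, symmetric])
  also have "\<dots> = (\<Sum>j. if j = n - 3 then TT j \<xi> else 0)" by (simp only: mult_TT[OF n])
  also have "\<dots> = TT (n - 3) \<xi>" by (rule sums_unique[symmetric, OF sums_single])
  finally show ?thesis unfolding fourier_u0 by (simp flip: of_real_mult)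
qed

lemma LP_u0:
  assumes n: "n \<ge> 4"
  shows "LP_block th (int n) (u0 \<phi>h s) x = complex_of_real (cc s (n - 3) * phi_tilde \<phi>h s x * cos (aa (n - 3) * x))"
proof -
  have fe: "(\<lambda>\<xi>. complex_of_real (lp_varphi th (\<xi> / 2 powr real_of_int (int n))) * fourier (\<lambda>x. complex_of_real (u0 \<phi>h s x)) \<xi>)
       = (\<lambda>\<xi>. complex_of_real (TT (n - 3) \<xi>))"
    by (rule ext, rule mult_fourier_u0[OF n])
  have "LP_block th (int n) (u0 \<phi>h s) = fmult (\<lambda>\<xi>. lp_varphi th (\<xi> / 2 powr real_of_int (int n))) (u0 \<phi>h s)"
    unfolding LP_block_def using n by auto
  then have "LP_block th (int n) (u0 \<phi>h s) x = inv_fourier (\<lambda>\<xi>. complex_of_real (TT (n - 3) \<xi>)) x"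
    unfolding fmult_def fe by simp
  also have "\<dots> = complex_of_real (cc s (n - 3) * K) * inv_fourier (\<lambda>\<xi>. complex_of_real ((\<phi>h (\<xi> - aa (n-3)) + \<phi>h (\<xi> + aa (n-3))) / 2)) x"
  proof -
    have "(\<lambda>\<xi>. complex_of_real (TT (n - 3) \<xi>) * cis (x * \<xi>)) = (\<lambda>\<xi>. complex_of_real (cc s (n - 3) * K) * (complex_of_real ((\<phi>h (\<xi> - aa (n-3)) + \<phi>h (\<xi> + aa (n-3))) / 2) * cis (x * \<xi>)))"
      unfolding TT_def by (simp add: fun_eq_iff)
    then show ?thesis unfolding inv_fourier_def by (simp only: integral_mult_right_zero) simp
  qed
  also have "\<dots> = complex_of_real (cc s (n - 3) * K * (schw_of \<phi>h x * cos (aa (n - 3) * x)))"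
    by (simp only: A.inv_fourier_mod) simp
  finally show ?thesis by (simp add: phit mult_ac)
qed

lemma mult_psi:
  assumes n: "n \<ge> 1"
  shows "lp_varphi th (\<xi> / 2 powr real_of_int (int n)) * \<psi>h \<xi> = 0"
proof (cases "\<psi>h \<xi> = 0")
  case False
  then have x: "\<bar>\<xi>\<bar> < 3/4" using ps_zero by force
  define P :: real where "P = 2 ^ n"
  have P2: "P \<ge> 2" unfolding P_def using power_increasing[OF n, of "2::real"] by simp
  have P0: "P > 0" "2 * P > 0" using P2 by auto
  have mm: "lp_varphi th (\<xi> / 2 powr real_of_int (int n)) = th (\<xi> / (2 * P)) - th (\<xi> / P)"
    unfolding mm_eq P_def by (simp add: mult.commute)
  have "th (\<xi> / P) = 1" using x P2 by (intro th_one le_div P0) auto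
  moreover have "th (\<xi> / (2 * P)) = 1" using x P2 by (intro th_one le_div P0) auto
  ultimately show ?thesis using mm by simp
qed simp

lemma u0_abs_le: "\<bar>u0 \<phi>h s x\<bar> \<le> (\<Sum>j. cc s j) * K * \<bar>schw_of \<phi>h x\<bar>"
proof -
  have "\<bar>u0 \<phi>h s x\<bar> \<le> (\<Sum>j. cc s j * (K * \<bar>schw_of \<phi>h x\<bar>))"
    unfolding u0_eq
  proof (rule suminf_abs_le')
    fix j show "\<bar>tm j x\<bar> \<le> cc s j * (K * \<bar>schw_of \<phi>h x\<bar>)"
      unfolding tm_eq abs_mult using cc_pos[of s j] K_pos by (simp add: mult_left_le)
  qed (rule summable_mult2[OF summable_cc'])
  also have "\<dots> = (\<Sum>j. cc s j) * K * \<bar>schw_of \<phi>h x\<bar>"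
    using suminf_mult2[OF summable_cc', of "K * \<bar>schw_of \<phi>h x\<bar>"] by (simp add: mult.assoc)
  finally show ?thesis .
qed

lemma u0cis_int: "integrable lborel (\<lambda>x. complex_of_real (u0 \<phi>h s x) * cis (-(x*\<xi>)))"
proof (rule Bochner_Integration.integrable_bound)
  show "integrable lborel (\<lambda>x. (\<Sum>j. cc s j) * K * \<bar>schw_of \<phi>h x\<bar>)"
    by (intro integrable_mult_right integrable_abs A.S_int)
  show "(\<lambda>x. complex_of_real (u0 \<phi>h s x) * cis (-(x*\<xi>))) \<in> borel_measurable lborel" by measurable
  have "0 \<le> (\<Sum>j. cc s j)" using cc_pos by (intro suminf_nonneg summable_cc') (auto intro: less_imp_le)
  then show "AE x in lborel. norm (complex_of_real (u0 \<phi>h s x) * cis (-(x*\<xi>))) \<le> norm ((\<Sum>j. cc s j) * K * \<bar>schw_of \<phi>h x\<bar>)"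
    using u0_abs_le K_pos by (auto simp: norm_mult abs_mult)
qed

lemma fourier_Phi: "(\<integral>x. complex_of_real (Phi_fun \<psi>h x) * cis (-(x*\<xi>)) \<partial>lborel) = complex_of_real (\<psi>h \<xi> / schw_of \<psi>h 0)"
proof -
  have "(\<lambda>x. complex_of_real (Phi_fun \<psi>h x) * cis (-(x*\<xi>))) = (\<lambda>x. complex_of_real (schw_of \<psi>h x) * cis (-(x*\<xi>)) / complex_of_real (schw_of \<psi>h 0))"
    unfolding Phi_fun_def by (simp add: fun_eq_iff)
  then show ?thesis using B.fourier_S[of \<xi>] unfolding fourier_def by simp
qed

lemma Phicis_int: "integrable lborel (\<lambda>x. complex_of_real (Phi_fun \<psi>h x) * cis (-(x*\<xi>)))"
proof -
  have "(\<lambda>x. complex_of_real (Phi_fun \<psi>h x) * cis (-(x*\<xi>))) = (\<lambda>x. complex_of_real (schw_of \<psi>h x) * cis (-(x*\<xi>)) / complex_of_real (schw_of \<psi>h 0))"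
    unfolding Phi_fun_def by (simp add: fun_eq_iff)
  then show ?thesis using B.Scis_int[of \<xi>] by simp
qed

lemma LP_u0n:
  assumes n: "n \<ge> 4"
  shows "LP_block th (int n) (u0n \<phi>h \<psi>h s n) = LP_block th (int n) (u0 \<phi>h s)"
proof -
  have "complex_of_real (lp_varphi th (\<xi> / 2 powr real_of_int (int n))) * fourier (\<lambda>x. complex_of_real (u0n \<phi>h \<psi>h s n x)) \<xi>
      = complex_of_real (lp_varphi th (\<xi> / 2 powr real_of_int (int n))) * fourier (\<lambda>x. complex_of_real (u0 \<phi>h s x)) \<xi>" for \<xi>
  proof -
    let ?m = "complex_of_real (lp_varphi th (\<xi> / 2 powr real_of_int (int n)))"
    have e: "(\<lambda>x. complex_of_real (u0n \<phi>h \<psi>h s n x) * cis (-(x*\<xi>))) =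
       (\<lambda>x. complex_of_real (u0 \<phi>h s x) * cis (-(x*\<xi>)) + complex_of_real (Phi_fun \<psi>h x) * cis (-(x*\<xi>)) / complex_of_real (real n))"
      unfolding u0n_def by (simp add: fun_eq_iff algebra_simps)
    have "fourier (\<lambda>x. complex_of_real (u0n \<phi>h \<psi>h s n x)) \<xi> =
        fourier (\<lambda>x. complex_of_real (u0 \<phi>h s x)) \<xi> + complex_of_real (\<psi>h \<xi> / schw_of \<psi>h 0) / complex_of_real (real n)"
      unfolding fourier_def e
      by (simp add: Bochner_Integration.integral_add[OF u0cis_int integrable_divide_zero[OF Phicis_int]] fourier_Phi)
    moreover have m0: "?m * complex_of_real (\<psi>h \<xi> / schw_of \<psi>h 0) = 0"
      using mult_psi[of n \<xi>] n by (simp only: of_real_mult[symmetric]) simp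
    moreover have "?m * (fourier (\<lambda>x. complex_of_real (u0 \<phi>h s x)) \<xi> + complex_of_real (\<psi>h \<xi> / schw_of \<psi>h 0) / complex_of_real (real n))
       = ?m * fourier (\<lambda>x. complex_of_real (u0 \<phi>h s x)) \<xi> + (?m * complex_of_real (\<psi>h \<xi> / schw_of \<psi>h 0)) / complex_of_real (real n)"
      by (simp add: distrib_left)
    ultimately show ?thesis by (simp only:) simp
  qed
  then have fe: "(\<lambda>\<xi>. complex_of_real (lp_varphi th (\<xi> / 2 powr real_of_int (int n))) * fourier (\<lambda>x. complex_of_real (u0n \<phi>h \<psi>h s n x)) \<xi>)
      = (\<lambda>\<xi>. complex_of_real (lp_varphi th (\<xi> / 2 powr real_of_int (int n))) * fourier (\<lambda>x. complex_of_real (u0 \<phi>h s x)) \<xi>)"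
    by (rule ext)
  have l: "LP_block th (int n) f = fmult (\<lambda>\<xi>. lp_varphi th (\<xi> / 2 powr real_of_int (int n))) f" for f
    unfolding LP_block_def using n by auto
  show ?thesis by (simp only: l fmult_def fe)
qed

end


lemma AE_shift:
  fixes d :: real and P :: "real \<Rightarrow> bool"
  assumes P[measurable]: "Measurable.pred borel P" and ae: "AE x in lborel. P x"
  shows "AE x in lborel. P (d + x)"
proof -
  have e: "distr lborel borel ((+) d) = (lborel :: real measure)" by (rule lborel_distr_plus)
  have "AE x in distr lborel borel ((+) d). P x" using ae by (simp only: e)
  then show ?thesis by (subst (asm) AE_distr_iff) auto
qed

lemma Lp_lower:
  fixes f :: "real \<Rightarrow> complex"
  assumes fm[measurable]: "f \<in> borel_measurable borel" and c: "c > 0" and L: "L > 0"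
    and key: "\<And>x. x \<in> {a..a+L} \<Longrightarrow> cmod (f x) \<ge> c \<or> cmod (f (x + d)) \<ge> c"
    and p: "p \<ge> 1"
  shows "Lp_norm p f \<ge> ennreal (c * (L/2) powr (inv_exp p))"
proof (cases "p = \<infinity>")
  case True
  have "ennreal c \<le> esssup lborel (\<lambda>x. ennreal (cmod (f x)))"
  proof (rule ccontr)
    assume "\<not> ?thesis"
    then have lt: "esssup lborel (\<lambda>x. ennreal (cmod (f x))) < ennreal c" by simp
    have "AE x in lborel. ennreal (cmod (f x)) \<le> esssup lborel (\<lambda>x. ennreal (cmod (f x)))"
      by (rule esssup_AE)
    then have a1: "AE x in lborel. cmod (f x) < c"
      by eventually_elim (use lt in \<open>auto simp: ennreal_less_iff dest: order.strict_trans1\<close>)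
    have a2: "AE x in lborel. cmod (f (d + x)) < c"
      by (rule AE_shift[OF _ a1]) measurable
    have "AE x in lborel. x \<notin> {a..a+L}"
      using a1 a2 by eventually_elim (use key in \<open>force simp: add.commute\<close>)
    then have "{a..a+L} \<in> null_sets lborel" by (subst AE_iff_null_sets) auto
    then show False using L by (simp add: null_sets_def)
  qed
  then show ?thesis using True L by (simp add: Lp_norm_def inv_exp_def)
next
  case False
  define q where "q = enn2real p"
  have pq: "p = ennreal q" unfolding q_def using False by (cases p) auto
  have q1: "q \<ge> 1" using p pq by (simp add: ennreal_le_iff[symmetric] del: ennreal_le_iff)
  define g where "g x = ennreal (cmod (f x) powr q)" for x
  have gm[measurable]: "g \<in> borel_measurable borel" unfolding g_def by measurable
  define I where "I = (\<integral>\<^sup>+ x. g x \<partial>lborel)"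
  have shift: "(\<integral>\<^sup>+ x. g (d + x) \<partial>lborel) = I"
    unfolding I_def using nn_integral_real_affine[OF gm, of 1 d] by simp
  have "(\<integral>\<^sup>+ x. ennreal (c powr q) * indicator {a..a+L} x \<partial>lborel) \<le> (\<integral>\<^sup>+ x. g x + g (d + x) \<partial>lborel)"
  proof (rule nn_integral_mono)
    fix x
    show "ennreal (c powr q) * indicator {a..a+L} x \<le> g x + g (d + x)"
    proof (cases "x \<in> {a..a+L}")
      case True
      have "c powr q \<le> cmod (f x) powr q \<or> c powr q \<le> cmod (f (d + x)) powr q"
        using key[OF True] c q1 by (auto intro!: powr_mono2 simp: add.commute)
      then have "ennreal (c powr q) \<le> g x \<or> ennreal (c powr q) \<le> g (d + x)"
        unfolding g_def by (auto intro: ennreal_leI)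
      then show ?thesis using True by (auto intro: order_trans add_increasing add_increasing2)
    qed simp
  qed
  also have "\<dots> = I + I" using shift unfolding I_def by (subst nn_integral_add) auto
  finally have le: "ennreal (c powr q * L) \<le> I + I"
    using L by (simp add: nn_integral_cmult_indicator ennreal_mult)
  show ?thesis
  proof (cases "I = \<infinity>")
    case True
    have "Lp_norm p f = \<infinity>"
      using True False q1 unfolding Lp_norm_def Let_def I_def g_def pq by simp
    then show ?thesis by simp
  next
    case Ifin: False
    define r where "r = enn2real I"
    have Ir: "I = ennreal r" "r \<ge> 0" unfolding r_def using Ifin by (cases I) auto
    have e2: "I + I = ennreal (r + r)" by (simp only: ennreal_plus[OF Ir(2) Ir(2)] Ir(1))
    have "ennreal (c powr q * L) \<le> ennreal (r + r)" using le unfolding e2 .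
    then have "c powr q * L \<le> r + r" by (subst (asm) ennreal_le_iff) (use Ir in auto)
    then have r1: "c powr q * (L / 2) \<le> r" by simp
    have cq: "(c powr q) powr (1/q) = c" using c q1 by (simp add: powr_powr)
    have "(c powr q * (L / 2)) powr (1/q) = (c powr q) powr (1/q) * (L/2) powr (1/q)"
      using c L by (intro powr_mult)
    then have "c * (L/2) powr (1/q) = (c powr q * (L / 2)) powr (1/q)" unfolding cq by simp
    also have "\<dots> \<le> r powr (1/q)" using r1 c L q1 by (intro powr_mono2) auto
    finally have "c * (L/2) powr (1/q) \<le> r powr (1/q)" .
    moreover have "Lp_norm p f = ennreal (r powr (1 / q))"
      using False Ifin q1 unfolding Lp_norm_def Let_def I_def[symmetric] g_def[symmetric] r_def pq
      by (simp add: g_def I_def)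
    ultimately show ?thesis using False q1 by (simp add: inv_exp_def pq ennreal_leI)
  qed
qed


definition tt :: "nat \<Rightarrow> real" where "tt n = 8 / 11 * pi * real n * 2 powr (- real n)"

lemma sin_diff_le: "\<bar>sin u - sin v\<bar> \<le> \<bar>u - v :: real\<bar>"
proof -
  have "\<bar>sin u - sin v\<bar> = \<bar>Im (cis u - cis v)\<bar>" by simp
  also have "\<dots> \<le> cmod (cis u - cis v)" by (rule abs_Im_le_cmod)
  also have "\<dots> \<le> \<bar>u - v\<bar>"
  proof -
    have "cis v * cis (u - v) = cis u" by (simp add: cis_mult)
    then have "cis u - cis v = cis v * (cis (u - v) - 1)"
      by (simp add: right_diff_distrib)
    then have "cmod (cis u - cis v) = cmod (cis (u - v) - 1)" by (simp add: norm_mult)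
    also have "\<dots> \<le> \<bar>u - v\<bar>"
      using iexp_approx1[of "u - v" 0] by (simp add: cis_conv_exp)
    finally show ?thesis .
  qed
  finally show ?thesis .
qed

lemma pow_sq: "n \<ge> 4 \<Longrightarrow> n * n \<le> (2::nat) ^ n"
proof (induction n rule: nat_induct_at_least)
  case base then show ?case by simp
next
  case (Suc n)
  have "4 * n \<le> n * n" using Suc.hyps by (intro mult_right_mono) auto
  moreover have "Suc n * Suc n = n * n + 2 * n + 1" by (simp add: algebra_simps)
  ultimately have "Suc n * Suc n \<le> 2 * (n * n)" using Suc.hyps by linarith
  also have "\<dots> \<le> 2 * 2 ^ n" using Suc.IH by simp
  finally show ?case by simp
qed

lemma pow_sq_real: "n \<ge> 4 \<Longrightarrow> real n * real n \<le> 2 ^ n"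
  using pow_sq[of n] by (metis of_nat_le_iff of_nat_mult of_nat_numeral of_nat_power)

lemma two_powr_neg: "2 powr (- real n) = 1 / 2 ^ n"
  by (simp add: powr_minus powr_realpow divide_inverse)

lemma n_pow: "n \<ge> 4 \<Longrightarrow> real n / 2 ^ n \<le> 1 / real n"
proof -
  assume n: "n \<ge> 4"
  then have p: "real n > 0" by simp
  have "real n * real n \<le> 2 ^ n" by (rule pow_sq_real[OF n])
  then show ?thesis using p by (simp add: field_simps)
qed

lemma inv_pow: "n \<ge> 4 \<Longrightarrow> 1 / 2 ^ n \<le> 1 / real n"
proof -
  assume n: "n \<ge> 4"
  have "real n * 1 \<le> real n * real n" using n by (intro mult_left_mono) auto
  also have "\<dots> \<le> 2 ^ n" by (rule pow_sq_real[OF n])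
  finally show ?thesis using n by (simp add: field_simps)
qed

context mainloc
begin

lemma aa_n: "n \<ge> 3 \<Longrightarrow> aa (n - 3) = 11/8 * 2 ^ n"
  unfolding aa_def by simp

lemma aa_tt: "n \<ge> 3 \<Longrightarrow> aa (n - 3) * tt n = pi * real n"
  unfolding aa_n tt_def two_powr_neg by simp

definition EE where "EE n x =
   phi_tilde \<phi>h s (x - tt n * u0 \<phi>h s x) * cos (aa (n - 3) * (x - tt n * u0 \<phi>h s x))
 - phi_tilde \<phi>h s (x - tt n * u0n \<phi>h \<psi>h s n x) * cos (aa (n - 3) * (x - tt n * u0n \<phi>h \<psi>h s n x))"

lemma Phi_bounds: "\<bar>Phi_fun \<psi>h z\<bar> \<le> 1" "\<bar>1 - Phi_fun \<psi>h z\<bar> \<le> \<bar>z\<bar>"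
proof -
  have p: "schw_of \<psi>h 0 > 0" by (rule B.S0_pos)
  show "\<bar>Phi_fun \<psi>h z\<bar> \<le> 1" unfolding Phi_fun_def using B.S_bound[of z] p by (simp add: abs_divide)
  have "\<bar>schw_of \<psi>h 0 - schw_of \<psi>h z\<bar> \<le> schw_of \<psi>h 0 * \<bar>z\<bar>" using B.S_lip[of 0 z] by simp
  moreover have e: "1 - schw_of \<psi>h z / schw_of \<psi>h 0 = (schw_of \<psi>h 0 - schw_of \<psi>h z) / schw_of \<psi>h 0"
    using p by (simp add: diff_divide_distrib)
  ultimately show "\<bar>1 - Phi_fun \<psi>h z\<bar> \<le> \<bar>z\<bar>" unfolding Phi_fun_def e abs_divide using p
    by (simp add: pos_divide_le_eq mult.commute)
qed

lemma Bu_nonneg: "Bu \<ge> 0" using u0_bound[of 0] by simp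

lemma phit_low: "x \<in> {0..2*pi*2 powr (- real N0)} \<Longrightarrow> \<forall>x\<in>{0..2*pi*2 powr (- real N0)}. schw_of \<phi>h x \<ge> schw_of \<phi>h 0 / 2
  \<Longrightarrow> phi_tilde \<phi>h s x \<ge> gam s / 2"
  unfolding phit K_def using A.S0_pos gam_gt4 by (auto simp: field_simps)

lemma E_lower1:
  fixes n N0 :: nat and z :: real
  defines "h \<equiv> 2 powr (- real N0)"
  assumes n4: "n \<ge> 4" and N07: "N0 \<ge> 7"
    and H: "\<forall>x\<in>{0..2*pi*2 powr (- real N0)}. schw_of \<phi>h x \<ge> schw_of \<phi>h 0 / 2"
    and e2: "tt n * (Bu + 1) \<le> h" and z: "h \<le> z" "z \<le> 3 * h"
  shows "\<bar>EE n z\<bar> \<ge> gam s * (\<bar>cos (aa (n - 3) * z - pi * real n * u0 \<phi>h s z)\<bar> - 1/10)"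
proof -
  define A where "A = aa (n - 3)"
  define \<theta> where "\<theta> = A * z - pi * real n * u0 \<phi>h s z"
  define y1 where "y1 = z - tt n * u0 \<phi>h s z"
  define y2 where "y2 = z - tt n * u0n \<phi>h \<psi>h s n z"
  define \<Phi> where "\<Phi> = Phi_fun \<psi>h z"
  have At: "A * tt n = pi * real n" unfolding A_def using n4 by (intro aa_tt) auto
  have hpos: "h > 0" unfolding h_def by simp
  have h128: "h \<le> 1/128"
  proof -
    have "h \<le> 2 powr (- 7)" unfolding h_def using N07 by (intro powr_mono) auto
    then show ?thesis by (simp add: powr_minus)
  qed
  have tt0: "tt n \<ge> 0" unfolding tt_def by simp
  have nn: "real n \<ge> 1" using n4 by simp
  have Phb: "\<bar>\<Phi>\<bar> \<le> 1" "\<bar>1 - \<Phi>\<bar> \<le> 3 * h" unfolding \<Phi>_def using Phi_bounds[of z] z hpos by auto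
  have y2e: "y2 = y1 - tt n * \<Phi> / real n" unfolding y2_def y1_def u0n_def \<Phi>_def by (simp add: algebra_simps)
  have ub: "\<bar>u0 \<phi>h s z\<bar> \<le> Bu" by (rule u0_bound)
  have d1: "\<bar>y1 - z\<bar> \<le> h"
  proof -
    have "\<bar>y1 - z\<bar> = tt n * \<bar>u0 \<phi>h s z\<bar>" unfolding y1_def using tt0 by (simp add: abs_mult)
    also have "\<dots> \<le> tt n * (Bu + 1)" using ub tt0 by (intro mult_left_mono) auto
    finally show ?thesis using e2 by simp
  qed
  have d2: "\<bar>y2 - z\<bar> \<le> h"
  proof -
    have "\<bar>\<Phi> / real n\<bar> \<le> 1" using Phb nn by (simp add: abs_divide divide_le_eq_1)
    then have "\<bar>u0 \<phi>h s z + \<Phi> / real n\<bar> \<le> Bu + 1" using ub by linarith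
    then have "\<bar>y2 - z\<bar> \<le> tt n * (Bu + 1)" unfolding y2_def u0n_def \<Phi>_def[symmetric] using tt0
      by (simp add: abs_mult mult_left_mono)
    then show ?thesis using e2 by simp
  qed
  have pi4: "pi < 4" by (rule pi_less_4)
  have pi2: "pi > 2" using pi_gt3 by simp
  have f4: "4 * h \<le> 2 * pi * h" using pi2 hpos by simp
  have y1r: "y1 \<in> {0..2*pi*h}" using d1 z hpos f4 unfolding atLeastAtMost_iff abs_le_iff by linarith
  have y2r: "y2 \<in> {0..2*pi*h}" using d2 z hpos f4 unfolding atLeastAtMost_iff abs_le_iff by linarith
  have p1: "phi_tilde \<phi>h s y1 \<ge> gam s / 2" by (rule phit_low[OF y1r[unfolded h_def] H])
  have p2: "phi_tilde \<phi>h s y2 \<ge> gam s / 2" by (rule phit_low[OF y2r[unfolded h_def] H])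
  have q2: "phi_tilde \<phi>h s y2 \<le> gam s" using phit_bound[of y2] by simp
  have th1: "A * y1 = \<theta>" unfolding y1_def \<theta>_def using At by (simp add: algebra_simps)
  have th2: "A * y2 = \<theta> - pi * \<Phi>" unfolding y2e right_diff_distrib th1
    using At nn by (simp add: field_simps)
  have r: "\<bar>cos \<theta> + cos (\<theta> - pi * \<Phi>)\<bar> \<le> 1/10"
  proof -
    have "cos \<theta> = - cos (\<theta> - pi)" by simp
    then have "\<bar>cos \<theta> + cos (\<theta> - pi * \<Phi>)\<bar> = \<bar>cos (\<theta> - pi * \<Phi>) - cos (\<theta> - pi)\<bar>" by simp
    also have "\<dots> \<le> \<bar>(\<theta> - pi * \<Phi>) - (\<theta> - pi)\<bar>" by (rule cos_diff_le)
    also have "\<dots> = \<bar>pi * (1 - \<Phi>)\<bar>" by (simp add: algebra_simps)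
    also have "\<dots> = pi * \<bar>1 - \<Phi>\<bar>" by (simp add: abs_mult)
    also have "\<dots> \<le> 4 * (3 * h)" using pi4 Phb by (intro mult_mono) auto
    also have "\<dots> \<le> 1/10" using h128 by simp
    finally show ?thesis .
  qed
  have E: "EE n z = (phi_tilde \<phi>h s y1 + phi_tilde \<phi>h s y2) * cos \<theta> - phi_tilde \<phi>h s y2 * (cos \<theta> + cos (\<theta> - pi * \<Phi>))"
    unfolding EE_def y1_def[symmetric] y2_def[symmetric] A_def[symmetric] th1 th2 by (simp add: algebra_simps)
  have "gam s * \<bar>cos \<theta>\<bar> \<le> (phi_tilde \<phi>h s y1 + phi_tilde \<phi>h s y2) * \<bar>cos \<theta>\<bar>"
    using p1 p2 by (intro mult_right_mono) auto
  moreover have "\<bar>phi_tilde \<phi>h s y2 * (cos \<theta> + cos (\<theta> - pi * \<Phi>))\<bar> \<le> gam s * (1/10)"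
    unfolding abs_mult using q2 p2 r gam_gt4 by (intro mult_mono) auto
  moreover have "\<bar>(phi_tilde \<phi>h s y1 + phi_tilde \<phi>h s y2) * cos \<theta>\<bar> = (phi_tilde \<phi>h s y1 + phi_tilde \<phi>h s y2) * \<bar>cos \<theta>\<bar>"
    using p1 p2 gam_gt4 by (simp add: abs_mult)
  ultimately have "\<bar>EE n z\<bar> \<ge> gam s * \<bar>cos \<theta>\<bar> - gam s * (1/10)" unfolding E by linarith
  then show ?thesis unfolding \<theta>_def A_def by (simp add: right_diff_distrib)
qed

end


lemma inv_exp_bounds: "p \<ge> 1 \<Longrightarrow> 0 \<le> inv_exp p \<and> inv_exp p \<le> 1"
proof -
  assume p: "p \<ge> 1"
  show ?thesis
  proof (cases "p = \<infinity>")
    case False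
    then obtain q where q: "p = ennreal q" "q \<ge> 0" by (cases p) auto
    have "ennreal 1 \<le> ennreal q" using p q(1) by simp
    then have "q \<ge> 1" using ennreal_le_iff[OF q(2), of 1] by blast
    then show ?thesis using q False by (simp add: inv_exp_def)
  qed (simp add: inv_exp_def)
qed

context mainloc
begin

lemma E_key:
  fixes n N0 :: nat and x :: real
  defines "h \<equiv> 2 powr (- real N0)"
  assumes n4: "n \<ge> 4" and N07: "N0 \<ge> 7"
    and H: "\<forall>x\<in>{0..2*pi*2 powr (- real N0)}. schw_of \<phi>h x \<ge> schw_of \<phi>h 0 / 2"
    and e2: "tt n * (Bu + 1) \<le> h" and e3: "pi / (2 * aa (n - 3)) \<le> h"
    and e4: "pi * real n * Lu * (pi / (2 * aa (n - 3))) \<le> 1/10"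
    and x: "h \<le> x" "x \<le> 2 * h"
  shows "\<bar>EE n x\<bar> \<ge> gam s / 2 \<or> \<bar>EE n (x + pi / (2 * aa (n - 3)))\<bar> \<ge> gam s / 2"
proof -
  define A where "A = aa (n - 3)"
  define \<delta> where "\<delta> = pi / (2 * A)"
  have Ap: "A > 0" unfolding A_def by (rule aa_pos)
  have \<delta>0: "\<delta> > 0" unfolding \<delta>_def using Ap by simp
  have A\<delta>: "A * \<delta> = pi / 2" unfolding \<delta>_def using Ap by simp
  define \<theta> where "\<theta> = A * x - pi * real n * u0 \<phi>h s x"
  define e where "e = pi * real n * (u0 \<phi>h s (x + \<delta>) - u0 \<phi>h s x)"
  have eb: "\<bar>e\<bar> \<le> 1/10"
  proof -
    have "\<bar>e\<bar> = pi * real n * \<bar>u0 \<phi>h s (x + \<delta>) - u0 \<phi>h s x\<bar>" unfolding e_def by (simp add: abs_mult)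
    also have "\<dots> \<le> pi * real n * (Lu * \<bar>(x + \<delta>) - x\<bar>)" by (intro mult_left_mono u0_lip) auto
    also have "\<dots> = pi * real n * Lu * \<delta>" using \<delta>0 by simp
    moreover have "pi * real n * Lu * \<delta> \<le> 1/10" using e4 unfolding \<delta>_def A_def .
    ultimately show ?thesis by linarith
  qed
  have hpos: "h > 0" unfolding h_def by simp
  have L1: "\<bar>EE n x\<bar> \<ge> gam s * (\<bar>cos \<theta>\<bar> - 1/10)"
    unfolding \<theta>_def A_def h_def using E_lower1[OF n4 N07 H e2[unfolded h_def]] x hpos unfolding h_def by auto
  have L2: "\<bar>EE n (x + \<delta>)\<bar> \<ge> gam s * (\<bar>cos (A * (x + \<delta>) - pi * real n * u0 \<phi>h s (x + \<delta>))\<bar> - 1/10)"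
    unfolding A_def using E_lower1[OF n4 N07 H e2[unfolded h_def], of "x + \<delta>"] x hpos \<delta>0 e3
    unfolding h_def \<delta>_def A_def by auto
  have "A * (x + \<delta>) - pi * real n * u0 \<phi>h s (x + \<delta>) = (\<theta> - e) + pi / 2"
    unfolding \<theta>_def e_def using A\<delta> by (simp add: algebra_simps)
  then have c2: "\<bar>cos (A * (x + \<delta>) - pi * real n * u0 \<phi>h s (x + \<delta>))\<bar> = \<bar>sin (\<theta> - e)\<bar>"
    by (simp add: cos_add)
  have s2: "\<bar>sin (\<theta> - e)\<bar> \<ge> \<bar>sin \<theta>\<bar> - \<bar>e\<bar>"
    using sin_diff_le[of \<theta> "\<theta> - e"] by simp
  have g4: "gam s > 4" by (rule gam_gt4)
  show ?thesis
  proof (cases "\<bar>cos \<theta>\<bar> \<ge> 7/10")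
    case True
    have "gam s * (1/2) \<le> gam s * (\<bar>cos \<theta>\<bar> - 1/10)" using True g4 by (intro mult_left_mono) auto
    then show ?thesis using L1 by simp
  next
    case False
    have "\<bar>sin \<theta>\<bar> \<ge> 7/10"
    proof (rule ccontr)
      assume "\<not> ?thesis"
      then have "\<bar>sin \<theta>\<bar> \<le> 7/10" by simp
      then have a: "(sin \<theta>)\<^sup>2 \<le> 49/100"
        using mult_mono[of "\<bar>sin \<theta>\<bar>" "7/10" "\<bar>sin \<theta>\<bar>" "7/10"] by (simp add: power2_eq_square abs_mult_self_eq)
      have "\<bar>cos \<theta>\<bar> \<le> 7/10" using False by simp
      then have b: "(cos \<theta>)\<^sup>2 \<le> 49/100"
        using mult_mono[of "\<bar>cos \<theta>\<bar>" "7/10" "\<bar>cos \<theta>\<bar>" "7/10"] by (simp add: power2_eq_square abs_mult_self_eq)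
      have "(sin \<theta>)\<^sup>2 + (cos \<theta>)\<^sup>2 = 1" by simp
      with a b show False by linarith
    qed
    then have "\<bar>sin (\<theta> - e)\<bar> - 1/10 \<ge> 1/2" using s2 eb by linarith
    then have "gam s * (1/2) \<le> gam s * (\<bar>sin (\<theta> - e)\<bar> - 1/10)" using g4 by (intro mult_left_mono) auto
    then show ?thesis using L2 c2 unfolding \<delta>_def A_def by simp
  qed
qed

end


lemma ev_ge: "\<forall>\<^sub>F n in sequentially. X \<le> real n"
  using filterlim_real_sequentially unfolding filterlim_at_top by blast

context mainloc
begin

lemma conds:
  assumes hpos: "h > 0"
  shows "\<forall>\<^sub>F n in sequentially. 4 \<le> n \<and> tt n * (Bu + 1) \<le> h \<and> pi / (2 * aa (n - 3)) \<le> h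
           \<and> pi * real n * Lu * (pi / (2 * aa (n - 3))) \<le> 1/10"
  using ev_ge[of "max 4 (max (3 * (Bu + 1) / h) (max (2 / h) (60 * Lu + 1)))"]
proof eventually_elim
  case (elim n)
  have n4: "real n \<ge> 4" and nB: "real n \<ge> 3 * (Bu + 1) / h" and nh: "real n \<ge> 2 / h"
    and nL: "real n \<ge> 60 * Lu + 1" using elim by auto
  have n4': "n \<ge> 4" using n4 by simp
  have np: "real n > 0" using n4 by simp
  define P :: real where "P = 2 ^ n"
  have Pp: "P > 0" unfolding P_def by simp
  have nP: "real n / P \<le> 1 / real n" unfolding P_def by (rule n_pow[OF n4'])
  have iP: "1 / P \<le> 1 / real n" unfolding P_def by (rule inv_pow[OF n4'])
  have A: "aa (n - 3) = 11/8 * P" unfolding P_def using n4' by (intro aa_n) auto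
  have pi4: "pi < 4" by (rule pi_less_4)
  have Bu0: "Bu \<ge> 0" by (rule Bu_nonneg)
  have L0: "Lu \<ge> 0" by (rule Lu_nonneg)
  have t: "tt n = 8/11 * pi * (real n / P)" unfolding tt_def P_def two_powr_neg by simp
  have t3: "tt n \<le> 3 / real n"
  proof -
    have "tt n \<le> 8/11 * 4 * (1 / real n)" unfolding t using pi4 nP
      by (intro mult_mono) (auto simp: Pp less_imp_le)
    also have "\<dots> \<le> 3 / real n" using np by (simp add: field_simps)
    finally show ?thesis .
  qed
  have c2: "tt n * (Bu + 1) \<le> h"
  proof -
    have "tt n * (Bu + 1) \<le> 3 / real n * (Bu + 1)" using t3 Bu0 by (intro mult_right_mono) auto
    also have "\<dots> \<le> h" using nB hpos np by (simp add: field_simps)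
    finally show ?thesis .
  qed
  have d: "pi / (2 * aa (n - 3)) = 4/11 * pi * (1 / P)" unfolding A using Pp by (simp add: field_simps)
  have d2: "pi / (2 * aa (n - 3)) \<le> 2 / real n"
  proof -
    have "4/11 * pi * (1 / P) \<le> 4/11 * 4 * (1 / real n)" using pi4 iP Pp
      by (intro mult_mono) (auto simp: less_imp_le)
    also have "4/11 * 4 * (1 / real n) \<le> 2 / real n" using np by (simp add: field_simps)
    finally show ?thesis unfolding d .
  qed
  have c3: "pi / (2 * aa (n - 3)) \<le> h"
    using d2 nh hpos np by (smt (verit) divide_le_eq mult.commute pos_divide_le_eq)
  have c4: "pi * real n * Lu * (pi / (2 * aa (n - 3))) \<le> 1/10"
  proof -
    have "pi * real n * Lu * (pi / (2 * aa (n - 3))) = 4/11 * (pi * pi) * Lu * (real n / P)"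
      unfolding d by (simp add: field_simps)
    also have "\<dots> \<le> 4/11 * 16 * Lu * (1 / real n)"
    proof (intro mult_mono mult_right_mono)
      have "pi * pi \<le> 4 * 4" using pi4 pi_gt_zero by (intro mult_mono) auto
      then show "pi * pi \<le> 16" by simp
    qed (use nP L0 Pp np in \<open>auto simp: less_imp_le\<close>)
    also have "\<dots> \<le> 1/10" using nL np L0 by (simp add: field_simps)
    finally show ?thesis .
  qed
  show ?case using n4' c2 c3 c4 by simp
qed

end


context mainloc
begin

lemma EE_meas[measurable]: "EE n \<in> borel_measurable borel"
proof -
  have [measurable]: "schw_of \<phi>h \<in> borel_measurable borel" "schw_of \<psi>h \<in> borel_measurable borel"
    by (rule A.S_meas, rule B.S_meas)
  show ?thesis unfolding EE_def phit u0n_def Phi_fun_def by measurable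
qed

lemma D_eq:
  assumes n4: "n \<ge> 4"
  shows "(\<lambda>x. LP_block th (int n) (u0 \<phi>h s) (x - tt n * u0 \<phi>h s x) - LP_block th (int n) (u0n \<phi>h \<psi>h s n) (x - tt n * u0n \<phi>h \<psi>h s n x))
       = (\<lambda>x. complex_of_real (cc s (n - 3) * EE n x))"
proof
  fix x
  show "LP_block th (int n) (u0 \<phi>h s) (x - tt n * u0 \<phi>h s x) - LP_block th (int n) (u0n \<phi>h \<psi>h s n) (x - tt n * u0n \<phi>h \<psi>h s n x)
       = complex_of_real (cc s (n - 3) * EE n x)"
    unfolding LP_u0n[OF n4] LP_u0[OF n4] EE_def by (simp add: algebra_simps)
qed

theorem main_result:
  assumes p: "p \<ge> 1"
  shows "\<exists>N1::nat. \<forall>N0::nat. N0 \<ge> N1 \<longrightarrow>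
           (\<forall>x\<in>{0 .. 2 * pi * 2 powr (- real N0)}. schw_of \<phi>h x \<ge> schw_of \<phi>h 0 / 2) \<longrightarrow>
           (\<forall>\<^sub>F n in sequentially.
              let t = 8 / 11 * pi * real n * 2 powr (- real n)
              in ennreal (2 powr (real n * s)) *
                   Lp_norm p (\<lambda>x. LP_block th (int n) (u0 \<phi>h s) (x - t * u0 \<phi>h s x)
                                 - LP_block th (int n) (u0n \<phi>h \<psi>h s n) (x - t * u0n \<phi>h \<psi>h s n x))
                 \<ge> ennreal (2 powr (- (real N0 * inv_exp p) - 3)))"
proof (intro exI[of _ 7] allI impI)
  fix N0 :: nat
  assume N07: "7 \<le> N0" and H: "\<forall>x\<in>{0 .. 2 * pi * 2 powr (- real N0)}. schw_of \<phi>h x \<ge> schw_of \<phi>h 0 / 2"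
  define h where "h = 2 powr (- real N0)"
  have hpos: "h > 0" unfolding h_def by simp
  define e where "e = inv_exp p"
  have e01: "0 \<le> e" "e \<le> 1" unfolding e_def using inv_exp_bounds[OF p] by auto
  show "\<forall>\<^sub>F n in sequentially.
              let t = 8 / 11 * pi * real n * 2 powr (- real n)
              in ennreal (2 powr (real n * s)) *
                   Lp_norm p (\<lambda>x. LP_block th (int n) (u0 \<phi>h s) (x - t * u0 \<phi>h s x)
                                 - LP_block th (int n) (u0n \<phi>h \<psi>h s n) (x - t * u0n \<phi>h \<psi>h s n x))
                 \<ge> ennreal (2 powr (- (real N0 * inv_exp p) - 3))"
    using conds[OF hpos]
  proof eventually_elim
    case (elim n)
    then have n4: "n \<ge> 4" and e2: "tt n * (Bu + 1) \<le> h" and e3: "pi / (2 * aa (n - 3)) \<le> h"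
      and e4: "pi * real n * Lu * (pi / (2 * aa (n - 3))) \<le> 1/10" by auto
    define c where "c = cc s (n - 3) * (gam s / 2)"
    have cpos: "c > 0" unfolding c_def using cc_pos gam_gt4 by simp
    have key: "cmod (complex_of_real (cc s (n - 3) * EE n x)) \<ge> c \<or>
               cmod (complex_of_real (cc s (n - 3) * EE n (x + pi / (2 * aa (n - 3))))) \<ge> c"
      if x: "x \<in> {h..h+h}" for x
    proof -
      have "\<bar>EE n x\<bar> \<ge> gam s / 2 \<or> \<bar>EE n (x + pi / (2 * aa (n - 3)))\<bar> \<ge> gam s / 2"
        by (rule E_key[OF n4 N07 H e2[unfolded h_def] e3[unfolded h_def] e4]) (use x in \<open>auto simp: h_def\<close>)
      then show ?thesis unfolding c_def norm_of_real abs_mult using cc_pos[of s "n - 3"]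
        by (auto intro: mult_left_mono)
    qed
    have "Lp_norm p (\<lambda>x. complex_of_real (cc s (n - 3) * EE n x)) \<ge> ennreal (c * (h/2) powr (inv_exp p))"
    proof -
      have fm: "(\<lambda>x. complex_of_real (cc s (n - 3) * EE n x)) \<in> borel_measurable borel" by measurable
      show ?thesis by (rule Lp_lower[OF fm cpos hpos key p])
    qed
    then have L: "Lp_norm p (\<lambda>x. LP_block th (int n) (u0 \<phi>h s) (x - tt n * u0 \<phi>h s x) - LP_block th (int n) (u0n \<phi>h \<psi>h s n) (x - tt n * u0n \<phi>h \<psi>h s n x))
        \<ge> ennreal (c * (h/2) powr e)" unfolding D_eq[OF n4] e_def .
    have one: "2 powr (real n * s) * cc s (n - 3) = 1"
    proof -
      have "cc s (n - 3) = 2 powr (- (real n * s))" unfolding cc_def using n4 by simp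
      then show ?thesis by (simp add: powr_minus)
    qed
    have h2: "h / 2 = 2 powr (- real N0 - 1)" unfolding h_def by (simp add: powr_diff)
    have "(h/2) powr e = 2 powr ((- real N0 - 1) * e)" unfolding h2 by (simp add: powr_powr)
    also have "\<dots> \<ge> 2 powr (- (real N0 * e) - 1)" using e01 by (intro powr_mono) (auto simp: algebra_simps)
    finally have he: "(h/2) powr e \<ge> 2 powr (- (real N0 * e) - 1)" .
    have "2 powr (- (real N0 * e) - 3) \<le> 2 powr (- (real N0 * e) - 1) * 2"
    proof -
      have eq: "2 powr (- (real N0 * e) - 1) * 2 = 2 powr (- (real N0 * e))"
        using powr_add[of 2 "- (real N0 * e) - 1" 1] by simp
      have "2 powr (- (real N0 * e) - 3) \<le> 2 powr (- (real N0 * e))" by (intro powr_mono) auto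
      then show ?thesis unfolding eq .
    qed
    also have "\<dots> \<le> (h/2) powr e * (gam s / 2)" using he gam_gt4 by (intro mult_mono) auto
    also have "\<dots> = 2 powr (real n * s) * (c * (h/2) powr e)" unfolding c_def using one
      by (simp add: algebra_simps)
    finally have fin: "2 powr (- (real N0 * e) - 3) \<le> 2 powr (real n * s) * (c * (h/2) powr e)" .
    have "ennreal (2 powr (- (real N0 * e) - 3)) \<le> ennreal (2 powr (real n * s)) * ennreal (c * (h/2) powr e)"
      using fin cpos by (simp add: ennreal_mult[symmetric] ennreal_leI)
    also have "\<dots> \<le> ennreal (2 powr (real n * s)) * Lp_norm p (\<lambda>x. LP_block th (int n) (u0 \<phi>h s) (x - tt n * u0 \<phi>h s x) - LP_block th (int n) (u0n \<phi>h \<psi>h s n) (x - tt n * u0n \<phi>h \<psi>h s n x))"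
      using L by (rule mult_left_mono) simp
    finally show ?case unfolding Let_def tt_def[symmetric] e_def .
  qed
qed

end


theorem proposition3p11:
  fixes th \<phi>h \<psi>h :: "real \<Rightarrow> real" and p :: ennreal and s :: real
  assumes th_smooth: "smooth_fun th"
    and th_even: "\<And>\<xi>. th (- \<xi>) = th \<xi>"
    and th_range: "\<And>\<xi>. 0 \<le> th \<xi> \<and> th \<xi> \<le> 1"
    and th_supp: "\<And>\<xi>. \<bar>\<xi>\<bar> > 4 / 3 \<Longrightarrow> th \<xi> = 0"
    and th_one: "\<And>\<xi>. \<bar>\<xi>\<bar> \<le> 3 / 4 \<Longrightarrow> th \<xi> = 1"
    and ph_smooth: "smooth_fun \<phi>h"
    and ph_even: "\<And>\<xi>. \<phi>h (- \<xi>) = \<phi>h \<xi>"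
    and ph_range: "\<And>\<xi>. 0 \<le> \<phi>h \<xi> \<and> \<phi>h \<xi> \<le> 1"
    and ph_one: "\<And>\<xi>. \<bar>\<xi>\<bar> \<le> 1 / 4 \<Longrightarrow> \<phi>h \<xi> = 1"
    and ph_zero: "\<And>\<xi>. \<bar>\<xi>\<bar> \<ge> 1 / 2 \<Longrightarrow> \<phi>h \<xi> = 0"
    and ps_smooth: "smooth_fun \<psi>h"
    and ps_even: "\<And>\<xi>. \<psi>h (- \<xi>) = \<psi>h \<xi>"
    and ps_range: "\<And>\<xi>. 0 \<le> \<psi>h \<xi> \<and> \<psi>h \<xi> \<le> 1"
    and ps_one: "\<And>\<xi>. 1 / 2 \<le> \<bar>\<xi>\<bar> \<Longrightarrow> \<bar>\<xi>\<bar> \<le> 5 / 8 \<Longrightarrow> \<psi>h \<xi> = 1"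
    and ps_zero: "\<And>\<xi>. \<bar>\<xi>\<bar> \<ge> 3 / 4 \<or> \<bar>\<xi>\<bar> \<le> 3 / 8 \<Longrightarrow> \<psi>h \<xi> = 0"
    and p_ge: "p \<ge> 1"
    and s_gt: "s > 1 + inv_exp p"
  shows "\<exists>N1::nat. \<forall>N0::nat. N0 \<ge> N1 \<longrightarrow>
           (\<forall>x\<in>{0 .. 2 * pi * 2 powr (- real N0)}. schw_of \<phi>h x \<ge> schw_of \<phi>h 0 / 2) \<longrightarrow>
           (\<forall>\<^sub>F n in sequentially.
              let t = 8 / 11 * pi * real n * 2 powr (- real n)
              in ennreal (2 powr (real n * s)) *
                   Lp_norm p (\<lambda>x. LP_block th (int n) (u0 \<phi>h s) (x - t * u0 \<phi>h s x)
                                 - LP_block th (int n) (u0n \<phi>h \<psi>h s n) (x - t * u0n \<phi>h \<psi>h s n x))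
                 \<ge> ennreal (2 powr (- (real N0 * inv_exp p) - 3)))"
proof -
  have s1: "s > 1" using s_gt inv_exp_bounds[OF p_ge] by linarith
  have g1: "goodh \<phi>h (-1/4) (1/4)"
  proof
    show "smooth_fun \<phi>h" by (rule ph_smooth)
    show "\<And>\<xi>. \<phi>h (- \<xi>) = \<phi>h \<xi>" by (rule ph_even)
    show "\<And>\<xi>. 0 \<le> \<phi>h \<xi> \<and> \<phi>h \<xi> \<le> 1" by (rule ph_range)
    show "\<And>\<xi>. 1 \<le> \<bar>\<xi>\<bar> \<Longrightarrow> \<phi>h \<xi> = 0" by (rule ph_zero) simp
    show "- 1 / 4 < (1 / 4 :: real)" by simp
    show "\<And>\<xi>. - 1 / 4 \<le> \<xi> \<Longrightarrow> \<xi> \<le> 1 / 4 \<Longrightarrow> \<phi>h \<xi> = 1" by (rule ph_one) auto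
  qed
  have g2: "goodh \<psi>h (1/2) (5/8)"
  proof
    show "smooth_fun \<psi>h" by (rule ps_smooth)
    show "\<And>\<xi>. \<psi>h (- \<xi>) = \<psi>h \<xi>" by (rule ps_even)
    show "\<And>\<xi>. 0 \<le> \<psi>h \<xi> \<and> \<psi>h \<xi> \<le> 1" by (rule ps_range)
    show "\<And>\<xi>. 1 \<le> \<bar>\<xi>\<bar> \<Longrightarrow> \<psi>h \<xi> = 0" by (rule ps_zero) simp
    show "1 / 2 < (5 / 8 :: real)" by simp
    show "\<And>\<xi>. 1 / 2 \<le> \<xi> \<Longrightarrow> \<xi> \<le> 5 / 8 \<Longrightarrow> \<psi>h \<xi> = 1" by (rule ps_one) auto
  qed
  have ml: "mainloc \<phi>h \<psi>h th s"
  proof (intro mainloc.intro g1 g2 mainloc_axioms.intro)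
    show "\<And>\<xi>. 4 / 3 < \<bar>\<xi>\<bar> \<Longrightarrow> th \<xi> = 0" by (rule th_supp)
    show "\<And>\<xi>. \<bar>\<xi>\<bar> \<le> 3 / 4 \<Longrightarrow> th \<xi> = 1" by (rule th_one)
    show "\<And>\<xi>. 1 / 2 \<le> \<bar>\<xi>\<bar> \<Longrightarrow> \<phi>h \<xi> = 0" by (rule ph_zero)
    show "\<And>\<xi>. 3 / 4 \<le> \<bar>\<xi>\<bar> \<Longrightarrow> \<psi>h \<xi> = 0" by (rule ps_zero) simp
    show "1 < s" by (rule s1)
  qed
  show ?thesis by (rule mainloc.main_result[OF ml p_ge])
qed

end
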